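(* Assume the setting and Assumption (A1) of the context. Let $\mathcal F$ be a pointwise measurable class of real functions on $\mathcal Y$ such that either (i) $\mathcal F$ has an envelope $F$ with $E[\sum_{\ell=1}^{N_{\mathbf 1}}F(Y_{\ell,\mathbf 1})]<\infty$ and $\sup_Q\log N(\eta\|F\|_{Q,1},\mathcal F,\|\cdot\|_{Q,1})<\infty$ for every $\eta>0$ (sup over finitely supported probability measures $Q$ on $\mathcal Y$); or (ii) $\mathcal F$ has an envelope $F$ and there is $\beta\in\mathbb R$ with $\|F\|_{\infty,\beta}<\infty$, $E[|\sum_{\ell=1}^{N_{\mathbf 1}}(1+|Y_{\ell,\mathbf 1}|^2)^{-\beta/2}|]<\infty$ and $N(\eta\|F\|_{\infty,\beta},\mathcal F,\|\cdot\|_{\infty,\beta})<\infty$ for every $\eta>0$. Then $$E\Big[\sup_{f\in\mathcal F}\Big|\frac1{\Pi_C}\sum_{\mathbf 1\le\mathbf j\le\mathbf C}\sum_{\ell=1}^{N_{\mathbf j}}f(Y_{\ell,\mathbf j})-E\Big[\sum_{\ell=1}^{N_{\mathbf 1}}f(Y_{\ell,\mathbf 1})\Big]\Big|\Big]=o(1)\quad\text{as }\underline C\to\infty.$$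
   Context: Fix $k,l\ge1$, $\mathcal Y\subset\mathbb R^l$. Cells $\mathbf j\in(\mathbb N^* )^k$, componentwise order $\le$, $\mathbf 1=(1,\dots,1)$. Data array $(N_{\mathbf j},(Y_{\ell,\mathbf j})_{\ell\ge1})_{\mathbf j\ge\mathbf 1}$, $N_{\mathbf j}\in\mathbb N$, $Y_{\ell,\mathbf j}\in\mathcal Y$. $\mathbf C=(C_1,\dots,C_k)$, $\underline C=\min_iC_i$, $\Pi_C=\prod_iC_i$. Assumption (A1): (i) separate exchangeability: for any permutations $\pi_1,\dots,\pi_k$ of $\mathbb N^*$ the array has the same joint law as the array with cell $\mathbf j$ replaced by cell $(\pi_1(j_1),\dots,\pi_k(j_k))$; (ii) for any $\mathbf c\ge\mathbf 1$, cells $\mathbf 1\le\mathbf j\le\mathbf c$ are jointly independent of cells $\mathbf j'\ge\mathbf c+\mathbf 1$; (iii) $E(N_{\mathbf 1})>0$; (iv) asymptotics $\underline C\to\infty$ with $\underline C/C_i\to\lambda_i\ge0$. Pointwise measurable: countable subclass whose pointwise limits yield all of $\mathcal F$. Envelope: measurable $F\ge\sup|f|$. $\|f\|_{Q,1}=\int|f|dQ$; $\|f\|_{\infty,\beta}=\sup_{y\in\mathcal Y}|f(y)(1+|y|^2)^{\beta/2}|$; $N(\varepsilon,\mathcal F,\|\cdot\|)$ = minimal number of closed radius-$\varepsilon$ balls with centers in $\mathcal F$ covering $\mathcal F$. *)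

theory Defs
  imports "HOL-Probability.Probability"
begin

text \<open>Conventions: cells and observation indices are 0-based in this formalization
  (Isabelle cell j corresponds to the paper's cell j + 1, observation index l to l + 1).\<close>

definition cellM :: "(nat \<times> (nat \<Rightarrow> real^'l)) measure" where
  "cellM = count_space UNIV \<Otimes>\<^sub>M PiM UNIV (\<lambda>_. borel)"

definition arrayM :: "('k \<Rightarrow> nat) set \<Rightarrow> (('k \<Rightarrow> nat) \<Rightarrow> nat \<times> (nat \<Rightarrow> real^'l)) measure" where
  "arrayM A = PiM A (\<lambda>_. cellM)"

definition arr :: "(('k \<Rightarrow> nat) \<Rightarrow> 'w \<Rightarrow> nat) \<Rightarrow> (('k \<Rightarrow> nat) \<Rightarrow> nat \<Rightarrow> 'w \<Rightarrow> real^'l)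
    \<Rightarrow> 'w \<Rightarrow> ('k \<Rightarrow> nat) \<Rightarrow> nat \<times> (nat \<Rightarrow> real^'l)" where
  "arr N Y \<omega> = (\<lambda>j. (N j \<omega>, \<lambda>l. Y j l \<omega>))"

definition covering_number :: "ereal \<Rightarrow> 'f set \<Rightarrow> ('f \<Rightarrow> 'f \<Rightarrow> ereal) \<Rightarrow> enat" where
  "covering_number eps F d =
     Inf {enat (card G) | G. finite G \<and> G \<subseteq> F \<and> (\<forall>f\<in>F. \<exists>g\<in>G. d f g \<le> eps)}"

definition L1Q :: "'a pmf \<Rightarrow> ('a \<Rightarrow> real) \<Rightarrow> real" where
  "L1Q Q f = measure_pmf.expectation Q (\<lambda>y. \<bar>f y\<bar>)"

definition wsup_norm :: "(real^'l) set \<Rightarrow> real \<Rightarrow> (real^'l \<Rightarrow> real) \<Rightarrow> ereal" where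
  "wsup_norm Ycal \<beta> f = (SUP y\<in>Ycal. ereal \<bar>f y * (1 + (norm y)\<^sup>2) powr (\<beta> / 2)\<bar>)"

definition pointwise_measurable :: "'a::topological_space set \<Rightarrow> ('a \<Rightarrow> real) set \<Rightarrow> bool" where
  "pointwise_measurable Ycal Fc \<longleftrightarrow>
     (\<forall>f\<in>Fc. f \<in> borel_measurable (restrict_space borel Ycal)) \<and>
     (\<exists>G\<subseteq>Fc. countable G \<and>
        (\<forall>f\<in>Fc. \<exists>g. (\<forall>m. g m \<in> G) \<and> (\<forall>y\<in>Ycal. (\<lambda>m. g m y) \<longlonglongrightarrow> f y)))"

definition envelope :: "'a::topological_space set \<Rightarrow> ('a \<Rightarrow> real) set \<Rightarrow> ('a \<Rightarrow> real) \<Rightarrow> bool" where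
  "envelope Ycal Fc Fe \<longleftrightarrow>
     Fe \<in> borel_measurable (restrict_space borel Ycal) \<and> (\<forall>f\<in>Fc. \<forall>y\<in>Ycal. \<bar>f y\<bar> \<le> Fe y)"

end

theory Submission
  imports Defs
begin

lemma restrict_space_ext:
  fixes f :: "'a::topological_space \<Rightarrow> real"
  assumes f: "f \<in> borel_measurable (restrict_space borel S)"
  shows "\<exists>h \<in> borel_measurable borel. \<forall>y\<in>S. h y = f y"
proof -
  have "\<forall>q::rat. \<exists>A \<in> sets borel. S \<inter> A = {y\<in>S. f y \<le> real_of_rat q}"
  proof
    fix q :: rat
    have "f -` {..real_of_rat q} \<inter> space (restrict_space borel S) \<in> sets (restrict_space borel S)"
      by (rule measurable_sets[OF f]) auto
    moreover have "f -` {..real_of_rat q} \<inter> space (restrict_space borel S) = {y\<in>S. f y \<le> real_of_rat q}"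
      by (auto simp: space_restrict_space)
    ultimately have "{y\<in>S. f y \<le> real_of_rat q} \<in> sets (restrict_space borel S)" by simp
    then show "\<exists>A \<in> sets borel. S \<inter> A = {y\<in>S. f y \<le> real_of_rat q}"
      by (auto simp: sets_restrict_space)
  qed
  then obtain A where A: "\<And>q. A q \<in> sets borel" "\<And>q. S \<inter> A q = {y\<in>S. f y \<le> real_of_rat q}"
    by metis
  define H where "H y = (INF q. if y \<in> A q then ereal (real_of_rat q) else \<infinity>)" for y
  have Hm: "H \<in> borel_measurable borel"
    unfolding H_def using A(1) by measurable
  have HS: "H y = ereal (f y)" if y: "y \<in> S" for y
  proof (rule antisym)
    have memA: "y \<in> A q \<longleftrightarrow> f y \<le> real_of_rat q" for q
      using A(2)[of q] y by blast
    show "H y \<le> ereal (f y)"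
    proof (rule ereal_le_epsilon2)
      fix e :: real assume e: "0 < e"
      obtain r where r: "r \<in> \<rat>" "f y < r" "r < f y + e"
        using Rats_dense_in_real[of "f y" "f y + e"] e by auto
      then obtain q where q: "r = real_of_rat q" by (auto simp: Rats_def)
      have "H y \<le> ereal (real_of_rat q)"
        unfolding H_def using memA[of q] r q by (intro INF_lower2[of q]) auto
      also have "\<dots> \<le> ereal (f y) + ereal e" using r q by simp
      finally show "H y \<le> ereal (f y) + ereal e" .
    qed
    show "ereal (f y) \<le> H y"
      unfolding H_def using memA by (intro INF_greatest) auto
  qed
  show ?thesis
    by (rule bexI[of _ "\<lambda>y. real_of_ereal (H y)"]) (use HS Hm in auto)
qed

definition sg :: "nat set \<Rightarrow> nat \<Rightarrow> real" where
  "sg E t = (if t \<in> E then -1 else 1)"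

lemma prod_Pow:
  fixes F :: "nat \<Rightarrow> bool \<Rightarrow> real"
  shows "(\<Sum>E\<in>Pow {..<m}. \<Prod>t<m. F t (t \<in> E)) = (\<Prod>t<m. F t True + F t False)"
proof (induction m)
  case 0
  then show ?case by simp
next
  case (Suc m)
  have disj: "Pow {..<m} \<inter> insert m ` Pow {..<m} = {}" by auto
  have inj: "inj_on (insert m) (Pow {..<m})"
    by (rule inj_onI) (metis Pow_iff insert_ident lessThan_iff less_irrefl subsetD)
  have e1: "(\<Prod>t<Suc m. F t (t \<in> E)) = (\<Prod>t<m. F t (t \<in> E)) * F m False" if "E \<in> Pow {..<m}" for E
  proof -
    have "m \<notin> E" using that by auto
    then show ?thesis by (simp add: prod.lessThan_Suc)
  qed
  have e2: "(\<Prod>t<Suc m. F t (t \<in> insert m E)) = (\<Prod>t<m. F t (t \<in> E)) * F m True" if "E \<in> Pow {..<m}" for E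
  proof -
    have "(\<Prod>t<m. F t (t \<in> insert m E)) = (\<Prod>t<m. F t (t \<in> E))"
      by (rule prod.cong) auto
    then show ?thesis by (simp add: prod.lessThan_Suc)
  qed
  have "(\<Sum>E\<in>Pow {..<Suc m}. \<Prod>t<Suc m. F t (t \<in> E))
      = (\<Sum>E\<in>Pow {..<m}. \<Prod>t<Suc m. F t (t \<in> E)) + (\<Sum>E\<in>insert m ` Pow {..<m}. \<Prod>t<Suc m. F t (t \<in> E))"
    by (simp add: lessThan_Suc Pow_insert sum.union_disjoint[OF _ _ disj])
  also have "(\<Sum>E\<in>insert m ` Pow {..<m}. \<Prod>t<Suc m. F t (t \<in> E)) = (\<Sum>E\<in>Pow {..<m}. \<Prod>t<Suc m. F t (t \<in> insert m E))"
    by (simp add: sum.reindex[OF inj])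
  also have "\<dots> = (\<Sum>E\<in>Pow {..<m}. (\<Prod>t<m. F t (t \<in> E)) * F m True)"
    by (rule sum.cong[OF refl e2])
  also have "(\<Sum>E\<in>Pow {..<m}. \<Prod>t<Suc m. F t (t \<in> E)) = (\<Sum>E\<in>Pow {..<m}. (\<Prod>t<m. F t (t \<in> E)) * F m False)"
    by (rule sum.cong[OF refl e1])
  finally show ?case
    by (simp only: sum_distrib_right[symmetric] Suc prod.lessThan_Suc) (simp add: algebra_simps)
qed

lemma cosh_bound: "exp (x::real) + exp (-x) \<le> 2 * exp (x\<^sup>2 / 2)"
proof -
  define h where "h = 2 * \<bar>x\<bar>"
  have "-h * (1/2) + ln (1 + (1/2) * (exp h - 1)) \<le> h\<^sup>2 / 8"
    using Hoeffdings_lemma_aux[of h "1/2"] by (simp add: h_def)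
  then have "ln ((1 + exp h) / 2) \<le> h / 2 + h\<^sup>2 / 8" by (simp add: field_simps)
  then have "(1 + exp h) / 2 \<le> exp (h / 2 + h\<^sup>2 / 8)"
    by (metis add_pos_pos divide_pos_pos exp_gt_zero exp_le_cancel_iff exp_ln zero_less_numeral zero_less_one)
  then have "exp (-\<bar>x\<bar>) * ((1 + exp h) / 2) \<le> exp (-\<bar>x\<bar>) * exp (h / 2 + h\<^sup>2 / 8)"
    by (intro mult_left_mono) auto
  also have "exp (-\<bar>x\<bar>) * exp (h / 2 + h\<^sup>2 / 8) = exp (x\<^sup>2 / 2)"
    by (simp add: h_def mult_exp_exp power2_eq_square algebra_simps)
  also have "exp (-\<bar>x\<bar>) * ((1 + exp h) / 2) = (exp (-\<bar>x\<bar>) + exp \<bar>x\<bar>) / 2"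
    by (simp add: h_def field_simps mult_exp_exp)
  finally have "exp (-\<bar>x\<bar>) + exp \<bar>x\<bar> \<le> 2 * exp (x\<^sup>2 / 2)" by simp
  then show ?thesis by (cases "x \<ge> 0") (auto simp: add.commute)
qed

lemma exp_moment:
  fixes d :: "nat \<Rightarrow> real"
  assumes "\<And>t. t < m \<Longrightarrow> \<bar>d t\<bar> \<le> L"
  shows "(\<Sum>E\<in>Pow {..<m}. exp (l * (\<Sum>t<m. sg E t * d t))) \<le> 2^m * exp (l\<^sup>2 * L\<^sup>2 / 2) ^ m"
proof -
  have "(\<Sum>E\<in>Pow {..<m}. exp (l * (\<Sum>t<m. sg E t * d t)))
      = (\<Sum>E\<in>Pow {..<m}. \<Prod>t<m. (\<lambda>t b. exp (l * ((if b then -1 else 1) * d t))) t (t \<in> E))"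
    by (rule sum.cong) (auto simp: sum_distrib_left exp_sum sg_def)
  also have "\<dots> = (\<Prod>t<m. exp (- (l * d t)) + exp (l * d t))"
    by (subst prod_Pow) simp
  also have "\<dots> \<le> (\<Prod>t<m. 2 * exp (l\<^sup>2 * L\<^sup>2 / 2))"
  proof (rule prod_mono)
    fix t assume t: "t \<in> {..<m}"
    show "0 \<le> exp (- (l * d t)) + exp (l * d t) \<and> exp (- (l * d t)) + exp (l * d t) \<le> 2 * exp (l\<^sup>2 * L\<^sup>2 / 2)"
    proof
    show "0 \<le> exp (- (l * d t)) + exp (l * d t)" by (intro add_nonneg_nonneg) auto
    have "exp (- (l * d t)) + exp (l * d t) \<le> 2 * exp ((l * d t)\<^sup>2 / 2)"
      using cosh_bound[of "l * d t"] by simp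
    also have "(l * d t)\<^sup>2 \<le> l\<^sup>2 * L\<^sup>2"
      using assms[of t] t by (simp add: power_mult_distrib abs_le_square_iff[symmetric] mult_left_mono)
    hence "2 * exp ((l * d t)\<^sup>2 / 2) \<le> 2 * exp (l\<^sup>2 * L\<^sup>2 / 2)" by simp
    finally show "exp (- (l * d t)) + exp (l * d t) \<le> 2 * exp (l\<^sup>2 * L\<^sup>2 / 2)" .
    qed
  qed
  also have "\<dots> = 2^m * exp (l\<^sup>2 * L\<^sup>2 / 2) ^ m"
    by (simp add: power_mult_distrib)
  finally show ?thesis .
qed

lemma tail_count:
  fixes d :: "nat \<Rightarrow> real" and L \<delta> :: real
  assumes d: "\<And>t. t < m \<Longrightarrow> \<bar>d t\<bar> \<le> L" and L: "L > 0" and dl: "\<delta> > 0"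
  shows "real (card {E\<in>Pow {..<m}. (\<Sum>t<m. sg E t * d t) > m * \<delta>}) \<le> 2^m * exp (- real m * \<delta>\<^sup>2 / (2 * L\<^sup>2))"
proof -
  define l where "l = \<delta> / L\<^sup>2"
  have l: "l > 0" using L dl by (simp add: l_def)
  define Bd where "Bd = {E\<in>Pow {..<m}. (\<Sum>t<m. sg E t * d t) > m * \<delta>}"
  have "real (card Bd) * exp (l * (m * \<delta>)) = (\<Sum>E\<in>Bd. exp (l * (m * \<delta>)))" by simp
  also have "\<dots> \<le> (\<Sum>E\<in>Bd. exp (l * (\<Sum>t<m. sg E t * d t)))"
    by (rule sum_mono) (use l in \<open>auto simp: Bd_def\<close>)
  also have "\<dots> \<le> (\<Sum>E\<in>Pow {..<m}. exp (l * (\<Sum>t<m. sg E t * d t)))"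
    by (rule sum_mono2) (auto simp: Bd_def)
  also have "\<dots> \<le> 2^m * exp (l\<^sup>2 * L\<^sup>2 / 2) ^ m"
    by (rule exp_moment) (use d in auto)
  finally have "real (card Bd) \<le> 2^m * (exp (l\<^sup>2 * L\<^sup>2 / 2) ^ m / exp (l * (m * \<delta>)))"
    by (simp add: field_simps)
  also have "exp (l\<^sup>2 * L\<^sup>2 / 2) ^ m / exp (l * (m * \<delta>)) = exp (- real m * \<delta>\<^sup>2 / (2 * L\<^sup>2))"
  proof -
    have "exp (l\<^sup>2 * L\<^sup>2 / 2) ^ m = exp (m * (l\<^sup>2 * L\<^sup>2 / 2))" by (subst exp_of_nat_mult[symmetric]) simp
    moreover have "m * (l\<^sup>2 * L\<^sup>2 / 2) - l * (m * \<delta>) = - m * \<delta>\<^sup>2 / (2 * L\<^sup>2)"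
      using L by (simp add: l_def field_simps power2_eq_square)
    ultimately show ?thesis by (simp add: exp_diff[symmetric])
  qed
  finally show ?thesis by (simp add: Bd_def)
qed

lemma hoeff_max:
  fixes V :: "(nat \<Rightarrow> real) set"
  assumes V: "finite V" and m: "m > 0" and L: "L > 0" and dl: "\<delta> > 0"
    and bd: "\<And>d t. d \<in> V \<Longrightarrow> t < m \<Longrightarrow> \<bar>d t\<bar> \<le> L"
  shows "(\<Sum>E\<in>Pow {..<m}. Max (insert 0 ((\<lambda>d. \<bar>\<Sum>t<m. sg E t * d t\<bar> / m) ` V)))
          \<le> 2^m * (\<delta> + L * (2 * card V * exp (- real m * \<delta>\<^sup>2 / (2 * L\<^sup>2))))"
proof -
  define Bd where "Bd = (\<Union>d\<in>V. {E\<in>Pow {..<m}. (\<Sum>t<m. sg E t * d t) > m * \<delta>} \<union>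
                                  {E\<in>Pow {..<m}. (\<Sum>t<m. sg E t * (- d t)) > m * \<delta>})"
  define ex where "ex = exp (- real m * \<delta>\<^sup>2 / (2 * L\<^sup>2))"
  have cBd: "real (card Bd) \<le> card V * (2 * (2^m * ex))"
  proof -
    have "real (card Bd) \<le> real (\<Sum>d\<in>V. card ({E\<in>Pow {..<m}. (\<Sum>t<m. sg E t * d t) > m * \<delta>} \<union>
                                  {E\<in>Pow {..<m}. (\<Sum>t<m. sg E t * (- d t)) > m * \<delta>}))"
      unfolding Bd_def by (intro of_nat_mono card_UN_le V)
    also have "\<dots> \<le> (\<Sum>d\<in>V. 2 * (2^m * ex))"
      unfolding of_nat_sum
    proof (rule sum_mono)
      fix d assume dV: "d \<in> V"
      have "real (card ({E\<in>Pow {..<m}. (\<Sum>t<m. sg E t * d t) > m * \<delta>} \<union>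
                                  {E\<in>Pow {..<m}. (\<Sum>t<m. sg E t * (- d t)) > m * \<delta>}))
           \<le> real (card {E\<in>Pow {..<m}. (\<Sum>t<m. sg E t * d t) > m * \<delta>}) + real (card
                                  {E\<in>Pow {..<m}. (\<Sum>t<m. sg E t * (- d t)) > m * \<delta>})"
        using of_nat_mono[OF card_Un_le, where 'a=real] by simp
      also have "\<dots> \<le> 2^m * ex + 2^m * ex"
      proof (rule add_mono)
        show "real (card {E\<in>Pow {..<m}. (\<Sum>t<m. sg E t * d t) > m * \<delta>}) \<le> 2^m * ex"
          unfolding ex_def by (rule tail_count[OF _ L dl]) (rule bd[OF dV])
        show "real (card {E\<in>Pow {..<m}. (\<Sum>t<m. sg E t * (- d t)) > m * \<delta>}) \<le> 2^m * ex"
          unfolding ex_def by (rule tail_count[OF _ L dl]) (simp add: bd[OF dV])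
      qed
      finally show "real (card ({E\<in>Pow {..<m}. (\<Sum>t<m. sg E t * d t) > m * \<delta>} \<union>
                                  {E\<in>Pow {..<m}. (\<Sum>t<m. sg E t * (- d t)) > m * \<delta>})) \<le> 2 * (2^m * ex)"
        by (simp add: ac_simps)
    qed
    finally show ?thesis by simp
  qed
  have pt: "Max (insert 0 ((\<lambda>d. \<bar>\<Sum>t<m. sg E t * d t\<bar> / m) ` V)) \<le> \<delta> + (if E \<in> Bd then L else 0)"
    if E: "E \<in> Pow {..<m}" for E
  proof (subst Max_le_iff, goal_cases)
    case 3
    show ?case
    proof (intro ballI)
      fix x assume "x \<in> insert 0 ((\<lambda>d. \<bar>\<Sum>t<m. sg E t * d t\<bar> / m) ` V)"
      then consider "x = 0" | d where "d \<in> V" "x = \<bar>\<Sum>t<m. sg E t * d t\<bar> / m" by auto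
      then show "x \<le> \<delta> + (if E \<in> Bd then L else 0)"
      proof cases
        case 1 then show ?thesis using dl L by auto
      next
        case 2
        have "\<bar>\<Sum>t<m. sg E t * d t\<bar> \<le> (\<Sum>t<m. \<bar>sg E t * d t\<bar>)" by (rule sum_abs)
        also have "\<dots> \<le> (\<Sum>t<m. L)"
          by (intro sum_mono) (use bd 2 in \<open>auto simp: sg_def abs_mult\<close>)
        finally have A: "\<bar>\<Sum>t<m. sg E t * d t\<bar> / m \<le> L" using m by (simp add: field_simps)
        show ?thesis
        proof (cases "E \<in> Bd")
          case True then show ?thesis using A 2 dl by simp
        next
          case False
          then have "\<not> (\<Sum>t<m. sg E t * d t) > m * \<delta>" "\<not> (\<Sum>t<m. sg E t * (- d t)) > m * \<delta>"
            using 2 E unfolding Bd_def by blast+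
          moreover have "(\<Sum>t<m. sg E t * (- d t)) = - (\<Sum>t<m. sg E t * d t)"
            by (simp add: sum_negf[symmetric])
          ultimately have "\<bar>\<Sum>t<m. sg E t * d t\<bar> \<le> m * \<delta>" by linarith
          then have "\<bar>\<Sum>t<m. sg E t * d t\<bar> / m \<le> \<delta>" using m by (simp add: divide_le_eq mult.commute)
          then show ?thesis using 2 False by simp
        qed
      qed
    qed
  qed (use V in auto)
  have "(\<Sum>E\<in>Pow {..<m}. Max (insert 0 ((\<lambda>d. \<bar>\<Sum>t<m. sg E t * d t\<bar> / m) ` V)))
     \<le> (\<Sum>E\<in>Pow {..<m}. \<delta> + (if E \<in> Bd then L else 0))"
    by (rule sum_mono) (rule pt)
  also have "\<dots> = 2^m * \<delta> + L * card Bd"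
  proof -
    have "Bd \<subseteq> Pow {..<m}" unfolding Bd_def by auto
    then have "(\<Sum>E\<in>Pow {..<m}. (if E \<in> Bd then L else 0)) = L * card Bd"
      by (simp add: sum.If_cases Int_absorb1)
    then show ?thesis by (simp add: sum.distrib card_Pow)
  qed
  also have "\<dots> \<le> 2^m * \<delta> + L * (card V * (2 * (2^m * ex)))"
    using cBd L by (intro add_left_mono mult_left_mono) auto
  finally show ?thesis by (simp add: ex_def algebra_simps)
qed

lemma sum_split2: "(\<Sum>t<2*m. f t) = (\<Sum>t<m. f t) + (\<Sum>t<m. f (m + t::nat))"
proof -
  have "(\<Sum>t<m+n. f t) = (\<Sum>t<m. f t) + (\<Sum>t<n. f (m + t))" for n
    by (induction n) (auto simp: add.assoc)
  from this[of m] show ?thesis by (simp add: mult_2)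
qed

lemma sg_abs: "\<bar>sg E t\<bar> = 1" by (simp add: sg_def)

lemma sum_sg_bound:
  fixes x :: "nat \<Rightarrow> real"
  shows "\<bar>\<Sum>t<m. sg E t * (x t - x (m + t))\<bar> \<le> (\<Sum>t<2*m. \<bar>x t\<bar>)"
proof -
  have "\<bar>\<Sum>t<m. sg E t * (x t - x (m + t))\<bar> \<le> (\<Sum>t<m. \<bar>sg E t * (x t - x (m + t))\<bar>)"
    by (rule sum_abs)
  also have "\<dots> \<le> (\<Sum>t<m. \<bar>x t\<bar> + \<bar>x (m + t)\<bar>)"
    by (rule sum_mono) (simp add: abs_mult sg_abs abs_triangle_ineq4)
  also have "\<dots> = (\<Sum>t<2*m. \<bar>x t\<bar>)" by (simp add: sum_split2 sum.distrib)
  finally show ?thesis .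
qed

lemma key_pt:
  fixes a c En :: "nat \<Rightarrow> real" and K :: real
  assumes aE: "\<And>t. t < 2*m \<Longrightarrow> \<bar>a t\<bar> \<le> En t"
  defines "b \<equiv> (\<lambda>t. if En t \<le> K then a t else 0)"
  shows "\<bar>\<Sum>t<m. sg E t * (a t - a (m + t))\<bar>
     \<le> (\<Sum>t<2*m. if En t \<le> K then 0 else En t) + (\<Sum>t<2*m. \<bar>b t - c t\<bar>)
       + \<bar>\<Sum>t<m. sg E t * (c t - c (m + t))\<bar>"
proof -
  have eq: "(\<Sum>t<m. sg E t * (a t - a (m + t))) =
      (\<Sum>t<m. sg E t * ((a t - b t) - (a (m+t) - b (m+t))))
    + (\<Sum>t<m. sg E t * ((b t - c t) - (b (m+t) - c (m+t))))
    + (\<Sum>t<m. sg E t * (c t - c (m + t)))"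
    by (simp add: sum.distrib[symmetric] algebra_simps)
  have 1: "\<bar>\<Sum>t<m. sg E t * ((a t - b t) - (a (m+t) - b (m+t)))\<bar> \<le> (\<Sum>t<2*m. if En t \<le> K then 0 else En t)"
  proof -
    have "\<bar>\<Sum>t<m. sg E t * ((a t - b t) - (a (m+t) - b (m+t)))\<bar> \<le> (\<Sum>t<2*m. \<bar>a t - b t\<bar>)"
      by (rule sum_sg_bound[of E "\<lambda>t. a t - b t" m, simplified])
    also have "\<dots> \<le> (\<Sum>t<2*m. if En t \<le> K then 0 else En t)"
      by (rule sum_mono) (use aE in \<open>auto simp: b_def\<close>)
    finally show ?thesis .
  qed
  have 2: "\<bar>\<Sum>t<m. sg E t * ((b t - c t) - (b (m+t) - c (m+t)))\<bar> \<le> (\<Sum>t<2*m. \<bar>b t - c t\<bar>)"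
    by (rule sum_sg_bound[of E "\<lambda>t. b t - c t" m, simplified])
  show ?thesis unfolding eq using 1 2 by linarith
qed


lemma key:
  fixes a :: "'g \<Rightarrow> nat \<Rightarrow> real" and En :: "nat \<Rightarrow> real" and V :: "(nat \<Rightarrow> real) set"
    and K \<delta> \<rho> :: real
  assumes m: "m > 0" and K: "K > 0" and dl: "\<delta> > 0" and V: "finite V" and rho: "\<rho> \<ge> 0"
    and En0: "\<And>t. t < 2*m \<Longrightarrow> En t \<ge> 0"
    and aE: "\<And>g t. g \<in> G \<Longrightarrow> t < 2*m \<Longrightarrow> \<bar>a g t\<bar> \<le> En t"
    and Vb: "\<And>c t. c \<in> V \<Longrightarrow> t < 2*m \<Longrightarrow> \<bar>c t\<bar> \<le> K"
    and appr: "\<And>g. g \<in> G \<Longrightarrow> \<exists>c\<in>V. (\<Sum>t<2*m. \<bar>(if En t \<le> K then a g t else 0) - c t\<bar>) \<le> m * \<rho>"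
  shows "(\<Sum>E\<in>Pow {..<m}. SUP g\<in>G. ennreal (\<bar>\<Sum>t<m. sg E t * (a g t - a g (m + t))\<bar> / m))
    \<le> ennreal (2^m * ((\<Sum>t<2*m. if En t \<le> K then 0 else En t) / m + \<rho> + \<delta>
          + 2 * K * (2 * card V * exp (- real m * \<delta>\<^sup>2 / (8 * K\<^sup>2)))))"
proof -
  define V' where "V' = (\<lambda>c t. c t - c (m + t)) ` V"
  define T where "T = (\<Sum>t<2*m. if En t \<le> K then 0 else En t)"
  define MV where "MV E = Max (insert 0 ((\<lambda>d. \<bar>\<Sum>t<m. sg E t * d t\<bar> / m) ` V'))" for E
  have V': "finite V'" "card V' \<le> card V" using V by (auto simp: V'_def card_image_le)
  have T0: "T \<ge> 0" unfolding T_def by (rule sum_nonneg) (use En0 in auto)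
  have MV0: "MV E \<ge> 0" for E unfolding MV_def using V' by (intro Max_ge) auto
  have ptE: "(SUP g\<in>G. ennreal (\<bar>\<Sum>t<m. sg E t * (a g t - a g (m + t))\<bar> / m)) \<le> ennreal (T / m + \<rho> + MV E)" for E
  proof (rule SUP_least)
    fix g assume g: "g \<in> G"
    obtain c where c: "c \<in> V" "(\<Sum>t<2*m. \<bar>(if En t \<le> K then a g t else 0) - c t\<bar>) \<le> m * \<rho>"
      using appr[OF g] by blast
    have "\<bar>\<Sum>t<m. sg E t * (a g t - a g (m + t))\<bar> \<le> T + m * \<rho> + \<bar>\<Sum>t<m. sg E t * (c t - c (m + t))\<bar>"
      using key_pt[where a="a g" and En=En and K=K and c=c and E=E and m=m] aE[OF g] c(2) unfolding T_def by fastforce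
    moreover have "\<bar>\<Sum>t<m. sg E t * (c t - c (m + t))\<bar> / m \<le> MV E"
      unfolding MV_def using V' c(1) by (intro Max_ge) (auto simp: V'_def)
    ultimately have "\<bar>\<Sum>t<m. sg E t * (a g t - a g (m + t))\<bar> / m \<le> T / m + \<rho> + MV E"
      using m by (simp add: field_simps)
    then show "ennreal (\<bar>\<Sum>t<m. sg E t * (a g t - a g (m + t))\<bar> / m) \<le> ennreal (T / m + \<rho> + MV E)"
      by (rule ennreal_leI)
  qed
  have "(\<Sum>E\<in>Pow {..<m}. SUP g\<in>G. ennreal (\<bar>\<Sum>t<m. sg E t * (a g t - a g (m + t))\<bar> / m))
       \<le> (\<Sum>E\<in>Pow {..<m}. ennreal (T / m + \<rho> + MV E))"
    by (rule sum_mono) (rule ptE)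
  also have "\<dots> = ennreal (\<Sum>E\<in>Pow {..<m}. T / m + \<rho> + MV E)"
    by (rule sum_ennreal) (use T0 rho MV0 in auto)
  also have "\<dots> \<le> ennreal (2^m * (T / m + \<rho> + \<delta>
          + 2 * K * (2 * card V * exp (- real m * \<delta>\<^sup>2 / (8 * K\<^sup>2)))))"
  proof (rule ennreal_leI)
    have hm: "(\<Sum>E\<in>Pow {..<m}. MV E) \<le> 2^m * (\<delta> + (2*K) * (2 * card V' * exp (- real m * \<delta>\<^sup>2 / (2 * (2*K)\<^sup>2))))"
      unfolding MV_def
    proof (rule hoeff_max[OF V'(1) m _ dl])
      show "0 < 2 * K" using K by simp
      fix d t assume "d \<in> V'" "t < m"
      then obtain c where "c \<in> V" "d = (\<lambda>t. c t - c (m + t))" by (auto simp: V'_def)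
      then show "\<bar>d t\<bar> \<le> 2 * K" using Vb[of c t] Vb[of c "m+t"] \<open>t < m\<close> by auto
    qed
    have e8: "(2::real) * (2*K)\<^sup>2 = 8 * K\<^sup>2" by (simp add: power_mult_distrib)
    have cv: "2^m * (\<delta> + (2*K) * (2 * real (card V') * exp (- real m * \<delta>\<^sup>2 / (8 * K\<^sup>2))))
      \<le> 2^m * (\<delta> + (2*K) * (2 * real (card V) * exp (- real m * \<delta>\<^sup>2 / (8 * K\<^sup>2))))"
      using V'(2) K by (intro mult_left_mono add_left_mono mult_right_mono) auto
    have "(\<Sum>E\<in>Pow {..<m}. T / m + \<rho> + MV E) = 2^m * (T / m + \<rho>) + (\<Sum>E\<in>Pow {..<m}. MV E)"
      by (simp add: sum.distrib card_Pow)
    then show "(\<Sum>E\<in>Pow {..<m}. T / m + \<rho> + MV E) \<le> 2^m * (T / m + \<rho> + \<delta>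
          + 2 * K * (2 * card V * exp (- real m * \<delta>\<^sup>2 / (8 * K\<^sup>2))))"
      using hm cv unfolding e8 by (simp add: algebra_simps)
  qed
  finally show ?thesis
    by (simp add: T_def)
qed

definition phi :: "(real^'l \<Rightarrow> real) \<Rightarrow> nat \<times> (nat \<Rightarrow> real^'l) \<Rightarrow> real" where
  "phi h c = (\<Sum>l<fst c. h (snd c l))"

definition Dg :: "nat \<Rightarrow> 'k \<Rightarrow> nat" where "Dg t = (\<lambda>_. t)"

lemma phi_meas[measurable]:
  assumes [measurable]: "h \<in> borel_measurable borel"
  shows "phi h \<in> borel_measurable (cellM :: (nat \<times> (nat \<Rightarrow> real^'l)) measure)"
proof -
  have "(\<lambda>c. (\<lambda>i c. \<Sum>l<i. h (snd c l)) (fst c) c) \<in> borel_measurable (cellM :: (nat \<times> (nat \<Rightarrow> real^'l)) measure)"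
  proof (rule measurable_compose_countable)
    fix i :: nat
    show "(\<lambda>c. \<Sum>l<i. h (snd c l)) \<in> borel_measurable (cellM :: (nat \<times> (nat \<Rightarrow> real^'l)) measure)"
      unfolding cellM_def by measurable
    show "fst \<in> (cellM :: (nat \<times> (nat \<Rightarrow> real^'l)) measure) \<rightarrow>\<^sub>M count_space UNIV"
      unfolding cellM_def by measurable
  qed
  then show ?thesis by (simp add: phi_def[abs_def])
qed

lemma space_arrayM: "space (arrayM A) = (\<Pi>\<^sub>E j\<in>A. UNIV)"
  by (simp add: arrayM_def space_PiM cellM_def space_pair_measure)

lemma comp_arrayM[measurable]: "j \<in> A \<Longrightarrow> (\<lambda>x. x j) \<in> arrayM A \<rightarrow>\<^sub>M cellM"
  unfolding arrayM_def by measurable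

definition sw :: "nat \<Rightarrow> nat \<Rightarrow> nat \<Rightarrow> nat" where
  "sw a b x = (if x = a then b else if x = b then a else x)"

lemma bij_sw: "bij (sw a b)"
  by (rule bij_betw_byWitness[where f'="sw a b"]) (auto simp: sw_def)

locale arrset =
  fixes M :: "'w measure"
    and Ycal :: "(real^'l) set"
    and N :: "('k::finite \<Rightarrow> nat) \<Rightarrow> 'w \<Rightarrow> nat"
    and Y :: "('k \<Rightarrow> nat) \<Rightarrow> nat \<Rightarrow> 'w \<Rightarrow> real^'l"
  assumes M: "prob_space M"
    and N_meas: "\<And>j. N j \<in> M \<rightarrow>\<^sub>M count_space UNIV"
    and Y_meas: "\<And>j l. Y j l \<in> borel_measurable M"
    and Y_in: "\<And>j l \<omega>. \<omega> \<in> space M \<Longrightarrow> Y j l \<omega> \<in> Ycal"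
    and exch: "\<And>\<pi> :: 'k \<Rightarrow> nat \<Rightarrow> nat. (\<forall>i. bij (\<pi> i)) \<Longrightarrow>
        distr M (arrayM UNIV) (\<lambda>\<omega>. (\<lambda>j. arr N Y \<omega> (\<lambda>i. \<pi> i (j i))))
          = distr M (arrayM UNIV) (arr N Y)"
    and indep: "\<And>c :: 'k \<Rightarrow> nat. (\<forall>i. c i \<ge> 1) \<Longrightarrow>
        prob_space.indep_var M
          (arrayM {j. \<forall>i. j i < c i}) (\<lambda>\<omega>. restrict (arr N Y \<omega>) {j. \<forall>i. j i < c i})
          (arrayM {j. \<forall>i. j i \<ge> c i}) (\<lambda>\<omega>. restrict (arr N Y \<omega>) {j. \<forall>i. j i \<ge> c i})"
begin

sublocale prob_space M by (rule M)

lemma cell_meas[measurable]: "(\<lambda>\<omega>. arr N Y \<omega> j) \<in> M \<rightarrow>\<^sub>M cellM"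
proof -
  have [measurable]: "N j \<in> M \<rightarrow>\<^sub>M count_space UNIV" by (rule N_meas)
  have "(\<lambda>\<omega>. (\<lambda>l. Y j l \<omega>)) \<in> M \<rightarrow>\<^sub>M PiM UNIV (\<lambda>_. borel)"
    by (rule measurable_PiM_single'[where f="\<lambda>l \<omega>. Y j l \<omega>", simplified]) (auto intro: Y_meas)
  then show ?thesis unfolding arr_def cellM_def by measurable
qed

lemma arr_meas[measurable]: "(\<lambda>\<omega>. \<lambda>j. arr N Y \<omega> (p j)) \<in> M \<rightarrow>\<^sub>M arrayM UNIV"
  unfolding arrayM_def
proof (rule measurable_PiM_single'[where f="\<lambda>j \<omega>. arr N Y \<omega> (p j)"])
  show "\<And>j. (\<lambda>\<omega>. arr N Y \<omega> (p j)) \<in> M \<rightarrow>\<^sub>M cellM" by (rule cell_meas)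
  have "space (cellM :: (nat \<times> (nat \<Rightarrow> real^'l)) measure) = UNIV"
    by (simp add: cellM_def space_pair_measure space_PiM)
  then show "(\<lambda>\<omega> j. arr N Y \<omega> (p j)) \<in> space M \<rightarrow> (\<Pi>\<^sub>E j\<in>UNIV. space cellM)" by simp
qed

lemma arr_meas'[measurable]: "arr N Y \<in> M \<rightarrow>\<^sub>M arrayM UNIV"
  using arr_meas[of "\<lambda>j. j"] by (simp add: arr_def)

lemma arr_restr_meas: "(\<lambda>\<omega>. restrict (arr N Y \<omega>) A) \<in> M \<rightarrow>\<^sub>M arrayM A"
  unfolding arrayM_def by (rule measurable_restrict) (rule cell_meas)

lemma transfer_nn:
  fixes \<pi> :: "'k \<Rightarrow> nat \<Rightarrow> nat"
  assumes "\<forall>i. bij (\<pi> i)" and [measurable]: "\<Psi> \<in> borel_measurable (arrayM UNIV)"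
  shows "(\<integral>\<^sup>+\<omega>. \<Psi> (\<lambda>j. arr N Y \<omega> (\<lambda>i. \<pi> i (j i))) \<partial>M) = (\<integral>\<^sup>+\<omega>. \<Psi> (arr N Y \<omega>) \<partial>M)"
proof -
  have "(\<integral>\<^sup>+\<omega>. \<Psi> (\<lambda>j. arr N Y \<omega> (\<lambda>i. \<pi> i (j i))) \<partial>M)
      = (\<integral>\<^sup>+x. \<Psi> x \<partial>distr M (arrayM UNIV) (\<lambda>\<omega>. (\<lambda>j. arr N Y \<omega> (\<lambda>i. \<pi> i (j i)))))"
    by (rule nn_integral_distr[symmetric]) measurable
  also have "\<dots> = (\<integral>\<^sup>+x. \<Psi> x \<partial>distr M (arrayM UNIV) (arr N Y))"
    by (simp add: exch[OF assms(1)])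
  also have "\<dots> = (\<integral>\<^sup>+\<omega>. \<Psi> (arr N Y \<omega>) \<partial>M)"
    by (rule nn_integral_distr) measurable
  finally show ?thesis .
qed

lemma transfer_int:
  fixes \<pi> :: "'k \<Rightarrow> nat \<Rightarrow> nat" and \<Psi> :: "_ \<Rightarrow> real"
  assumes "\<forall>i. bij (\<pi> i)" and [measurable]: "\<Psi> \<in> borel_measurable (arrayM UNIV)"
  shows "(\<integral>\<omega>. \<Psi> (\<lambda>j. arr N Y \<omega> (\<lambda>i. \<pi> i (j i))) \<partial>M) = (\<integral>\<omega>. \<Psi> (arr N Y \<omega>) \<partial>M)"
proof -
  have "(\<integral>\<omega>. \<Psi> (\<lambda>j. arr N Y \<omega> (\<lambda>i. \<pi> i (j i))) \<partial>M)
      = (\<integral>x. \<Psi> x \<partial>distr M (arrayM UNIV) (\<lambda>\<omega>. (\<lambda>j. arr N Y \<omega> (\<lambda>i. \<pi> i (j i)))))"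
    by (rule integral_distr[symmetric]) measurable
  also have "\<dots> = (\<integral>x. \<Psi> x \<partial>distr M (arrayM UNIV) (arr N Y))"
    by (simp add: exch[OF assms(1)])
  also have "\<dots> = (\<integral>\<omega>. \<Psi> (arr N Y \<omega>) \<partial>M)"
    by (rule integral_distr) measurable
  finally show ?thesis .
qed

lemma cell_same_nn:
  assumes [measurable]: "\<psi> \<in> borel_measurable cellM"
  shows "(\<integral>\<^sup>+\<omega>. \<psi> (arr N Y \<omega> (Dg t)) \<partial>M) = (\<integral>\<^sup>+\<omega>. \<psi> (arr N Y \<omega> (Dg 0)) \<partial>M)"
proof -
  have "(\<integral>\<^sup>+\<omega>. (\<lambda>x. \<psi> (x (Dg 0))) (\<lambda>j. arr N Y \<omega> (\<lambda>i. sw 0 t (j i))) \<partial>M)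
      = (\<integral>\<^sup>+\<omega>. (\<lambda>x. \<psi> (x (Dg 0))) (arr N Y \<omega>) \<partial>M)"
    by (rule transfer_nn) (auto simp: bij_sw)
  then show ?thesis by (simp add: Dg_def sw_def)
qed

lemma cell_same_int:
  fixes \<psi> :: "_ \<Rightarrow> real"
  assumes [measurable]: "\<psi> \<in> borel_measurable cellM"
  shows "(\<integral>\<omega>. \<psi> (arr N Y \<omega> (Dg t)) \<partial>M) = (\<integral>\<omega>. \<psi> (arr N Y \<omega> (Dg 0)) \<partial>M)"
proof -
  have "(\<integral>\<omega>. (\<lambda>x. \<psi> (x (Dg 0))) (\<lambda>j. arr N Y \<omega> (\<lambda>i. sw 0 t (j i))) \<partial>M)
      = (\<integral>\<omega>. (\<lambda>x. \<psi> (x (Dg 0))) (arr N Y \<omega>) \<partial>M)"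
    by (rule transfer_int) (auto simp: bij_sw)
  then show ?thesis by (simp add: Dg_def sw_def)
qed

end

context arrset begin

definition Z :: "(real^'l \<Rightarrow> real) \<Rightarrow> nat \<Rightarrow> 'w \<Rightarrow> real" where
  "Z h t \<omega> = phi h (arr N Y \<omega> (Dg t))"

lemma Z_alt: "Z h t \<omega> = (\<Sum>l<N (Dg t) \<omega>. h (Y (Dg t) l \<omega>))"
  by (simp add: Z_def phi_def arr_def)

lemma Z_meas[measurable]: "h \<in> borel_measurable borel \<Longrightarrow> Z h t \<in> borel_measurable M"
  unfolding Z_def by (rule measurable_compose[OF cell_meas phi_meas])

end

locale core = arrset M Ycal N Y
  for M :: "'w measure"
    and Ycal :: "(real^'l) set"
    and N :: "('k::finite \<Rightarrow> nat) \<Rightarrow> 'w \<Rightarrow> nat"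
    and Y :: "('k \<Rightarrow> nat) \<Rightarrow> nat \<Rightarrow> 'w \<Rightarrow> real^'l" +
  fixes H :: "(real^'l \<Rightarrow> real) set" and Fb :: "real^'l \<Rightarrow> real"
  assumes H_count: "countable H"
    and H_meas: "\<And>h. h \<in> H \<Longrightarrow> h \<in> borel_measurable borel"
    and Fb_meas[measurable]: "Fb \<in> borel_measurable borel"
    and H_env: "\<And>h y. h \<in> H \<Longrightarrow> y \<in> Ycal \<Longrightarrow> \<bar>h y\<bar> \<le> Fb y"
    and Fb_nonneg: "\<And>y. y \<in> Ycal \<Longrightarrow> Fb y \<ge> 0"
    and Fb_int: "(\<integral>\<^sup>+\<omega>. ennreal (Z Fb 0 \<omega>) \<partial>M) < \<infinity>"
begin

definition P :: "(real^'l \<Rightarrow> real) \<Rightarrow> real" where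
  "P h = expectation (Z h 0)"

lemma Zb_nonneg: "\<omega> \<in> space M \<Longrightarrow> Z Fb t \<omega> \<ge> 0"
  unfolding Z_alt by (intro sum_nonneg Fb_nonneg Y_in)

lemma Z_env: "h \<in> H \<Longrightarrow> \<omega> \<in> space M \<Longrightarrow> \<bar>Z h t \<omega>\<bar> \<le> Z Fb t \<omega>"
  unfolding Z_alt by (rule order.trans[OF sum_abs sum_mono]) (intro H_env Y_in)

lemma Zb_nn: "(\<integral>\<^sup>+\<omega>. ennreal (Z Fb t \<omega>) \<partial>M) = (\<integral>\<^sup>+\<omega>. ennreal (Z Fb 0 \<omega>) \<partial>M)"
  unfolding Z_def by (rule cell_same_nn) measurable

lemma Zb_int: "integrable M (Z Fb t)"
proof (rule integrableI_bounded)
  show "Z Fb t \<in> borel_measurable M" by measurable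
  have "(\<integral>\<^sup>+\<omega>. ennreal (norm (Z Fb t \<omega>)) \<partial>M) = (\<integral>\<^sup>+\<omega>. ennreal (Z Fb t \<omega>) \<partial>M)"
    by (rule nn_integral_cong) (simp add: Zb_nonneg)
  then show "(\<integral>\<^sup>+\<omega>. ennreal (norm (Z Fb t \<omega>)) \<partial>M) < \<infinity>"
    unfolding Zb_nn[of t] using Fb_int by simp
qed

lemma Z_int: assumes h: "h \<in> H" shows "integrable M (Z h t)"
proof (rule Bochner_Integration.integrable_bound[OF Zb_int[of t]])
  show "Z h t \<in> borel_measurable M" using H_meas[OF h] by measurable
  show "AE x in M. norm (Z h t x) \<le> norm (Z Fb t x)"
  proof (rule AE_I2)
    fix x assume x: "x \<in> space M"
    show "norm (Z h t x) \<le> norm (Z Fb t x)" using Z_env[OF h x, of t] Zb_nonneg[OF x, of t] by simp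
  qed
qed

lemma Z_exp: "h \<in> H \<Longrightarrow> expectation (Z h t) = P h"
  unfolding P_def Z_def by (rule cell_same_int) (use H_meas in measurable)

end

context core begin

definition al :: "nat \<Rightarrow> (real^'l \<Rightarrow> real) \<Rightarrow> (('k \<Rightarrow> nat) \<Rightarrow> nat \<times> (nat \<Rightarrow> real^'l)) \<Rightarrow> real" where
  "al m h x = (\<Sum>t<m. phi h (x (Dg t))) / m"
definition be :: "nat \<Rightarrow> (real^'l \<Rightarrow> real) \<Rightarrow> (('k \<Rightarrow> nat) \<Rightarrow> nat \<times> (nat \<Rightarrow> real^'l)) \<Rightarrow> real" where
  "be m h x = (\<Sum>t<m. phi h (x (Dg (m + t)))) / m"

lemma al_meas:
  assumes h: "h \<in> borel_measurable borel"
  shows "al m h \<in> borel_measurable (arrayM {j. \<forall>i. j i < m})"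
  unfolding al_def
proof (intro borel_measurable_divide borel_measurable_sum)
  fix t assume "t \<in> {..<m}"
  then have "Dg t \<in> {j. \<forall>i. j i < m}" by (simp add: Dg_def)
  then show "(\<lambda>x. phi h (x (Dg t))) \<in> borel_measurable (arrayM {j. \<forall>i. j i < m})"
    by (rule measurable_compose[OF comp_arrayM phi_meas[OF h]])
qed simp

lemma be_meas:
  assumes h: "h \<in> borel_measurable borel"
  shows "be m h \<in> borel_measurable (arrayM {j. \<forall>i. j i \<ge> m})"
  unfolding be_def
proof (intro borel_measurable_divide borel_measurable_sum)
  fix t assume "t \<in> {..<m}"
  have "Dg (m + t) \<in> {j. \<forall>i. j i \<ge> m}" by (simp add: Dg_def)
  then show "(\<lambda>x. phi h (x (Dg (m + t)))) \<in> borel_measurable (arrayM {j. \<forall>i. j i \<ge> m})"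
    by (rule measurable_compose[OF comp_arrayM phi_meas[OF h]])
qed simp

lemma J:
  assumes m: "m > 0"
  shows "(\<integral>\<^sup>+\<omega>. (SUP h\<in>H. ennreal \<bar>(\<Sum>t<m. Z h t \<omega>) / m - P h\<bar>) \<partial>M)
      \<le> (\<integral>\<^sup>+\<omega>. (SUP h\<in>H. ennreal (\<bar>\<Sum>t<m. Z h t \<omega> - Z h (m + t) \<omega>\<bar> / m)) \<partial>M)"
proof -
  define A where "A = {j::'k\<Rightarrow>nat. \<forall>i. j i < m}"
  define B where "B = {j::'k\<Rightarrow>nat. \<forall>i. j i \<ge> m}"
  define X1 where "X1 \<omega> = restrict (arr N Y \<omega>) A" for \<omega>
  define X2 where "X2 \<omega> = restrict (arr N Y \<omega>) B" for \<omega>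
  have ind: "indep_var (arrayM A) X1 (arrayM B) X2"
    using indep[of "\<lambda>_. m"] m unfolding A_def B_def X1_def[abs_def] X2_def[abs_def] by simp
  have X1m[measurable]: "X1 \<in> M \<rightarrow>\<^sub>M arrayM A" unfolding X1_def[abs_def] by (rule arr_restr_meas)
  have X2m[measurable]: "X2 \<in> M \<rightarrow>\<^sub>M arrayM B" unfolding X2_def[abs_def] by (rule arr_restr_meas)
  have dist: "distr M (arrayM A) X1 \<Otimes>\<^sub>M distr M (arrayM B) X2 = distr M (arrayM A \<Otimes>\<^sub>M arrayM B) (\<lambda>x. (X1 x, X2 x))"
    using ind indep_var_distribution_eq by blast
  define \<mu>1 where "\<mu>1 = distr M (arrayM A) X1"
  define \<mu>2 where "\<mu>2 = distr M (arrayM B) X2"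
  interpret P1: prob_space \<mu>1 unfolding \<mu>1_def by (rule prob_space_distr) simp
  interpret P2: prob_space \<mu>2 unfolding \<mu>2_def by (rule prob_space_distr) simp
  have alm[measurable]: "al m h \<in> borel_measurable (arrayM A)" if "h \<in> H" for h
    unfolding A_def using H_meas[OF that] by (rule al_meas)
  have bem[measurable]: "be m h \<in> borel_measurable (arrayM B)" if "h \<in> H" for h
    unfolding B_def using H_meas[OF that] by (rule be_meas)
  have al_X1: "al m h (X1 \<omega>) = (\<Sum>t<m. Z h t \<omega>) / m" for h \<omega>
    unfolding al_def X1_def Z_def by (simp add: A_def Dg_def)
  have be_X2: "be m h (X2 \<omega>) = (\<Sum>t<m. Z h (m + t) \<omega>) / m" for h \<omega>
    unfolding be_def X2_def Z_def by (simp add: B_def Dg_def)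
  have be_int: "integrable \<mu>2 (be m h)" if h: "h \<in> H" for h
  proof -
    have "integrable M (\<lambda>\<omega>. (\<Sum>t<m. Z h (m + t) \<omega>) / m)"
      using Z_int[OF h] by auto
    then have "integrable M (\<lambda>\<omega>. be m h (X2 \<omega>))" by (simp add: be_X2)
    then show ?thesis unfolding \<mu>2_def using h by (subst integrable_distr_eq) auto
  qed
  have be_exp: "(\<integral>x. be m h x \<partial>\<mu>2) = P h" if h: "h \<in> H" for h
  proof -
    have "(\<integral>x. be m h x \<partial>\<mu>2) = (\<integral>\<omega>. be m h (X2 \<omega>) \<partial>M)"
      unfolding \<mu>2_def using h by (intro integral_distr) auto
    also have "\<dots> = (\<integral>\<omega>. (\<Sum>t<m. Z h (m + t) \<omega>) / m \<partial>M)" by (simp add: be_X2)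
    also have "\<dots> = (\<Sum>t<m. expectation (Z h (m + t))) / m"
      using Z_int[OF h] by (simp add: Bochner_Integration.integral_sum)
    also have "\<dots> = P h" using m by (simp add: Z_exp[OF h])
    finally show ?thesis .
  qed
  define \<Phi> where "\<Phi> z = (SUP h\<in>H. ennreal \<bar>al m h (fst z) - be m h (snd z)\<bar>)" for z
  have \<Phi>m[measurable]: "\<Phi> \<in> borel_measurable (arrayM A \<Otimes>\<^sub>M arrayM B)"
    unfolding \<Phi>_def[abs_def]
  proof (rule borel_measurable_SUP[OF H_count])
    fix h assume [measurable]: "h \<in> H"
    show "(\<lambda>z. ennreal \<bar>al m h (fst z) - be m h (snd z)\<bar>) \<in> borel_measurable (arrayM A \<Otimes>\<^sub>M arrayM B)"
      by measurable
  qed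
  define \<Phi>1 where "\<Phi>1 x = (SUP h\<in>H. ennreal \<bar>al m h x - P h\<bar>)" for x
  have \<Phi>1m[measurable]: "\<Phi>1 \<in> borel_measurable (arrayM A)"
    unfolding \<Phi>1_def[abs_def]
  proof (rule borel_measurable_SUP[OF H_count])
    fix h assume [measurable]: "h \<in> H"
    show "(\<lambda>x. ennreal \<bar>al m h x - P h\<bar>) \<in> borel_measurable (arrayM A)"
      by measurable
  qed
  have pt: "\<Phi>1 x \<le> (\<integral>\<^sup>+y. \<Phi> (x, y) \<partial>\<mu>2)" for x
    unfolding \<Phi>1_def
  proof (rule SUP_least)
    fix h assume h: "h \<in> H"
    have "\<bar>al m h x - P h\<bar> = \<bar>\<integral>y. al m h x - be m h y \<partial>\<mu>2\<bar>"
      using be_int[OF h] by (simp add: be_exp[OF h] P2.prob_space)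
    also have "ennreal \<dots> \<le> (\<integral>\<^sup>+y. ennreal (norm (al m h x - be m h y)) \<partial>\<mu>2)"
    proof -
      have "integrable \<mu>2 (\<lambda>y. al m h x - be m h y)"
        using be_int[OF h] by (intro Bochner_Integration.integrable_diff P2.integrable_const)
      from integral_norm_bound_ennreal[OF this] show ?thesis by simp
    qed
    also have "\<dots> \<le> (\<integral>\<^sup>+y. \<Phi> (x, y) \<partial>\<mu>2)"
      unfolding \<Phi>_def by (intro nn_integral_mono) (use h in \<open>auto intro: SUP_upper2\<close>)
    finally show "ennreal \<bar>al m h x - P h\<bar> \<le> (\<integral>\<^sup>+y. \<Phi> (x, y) \<partial>\<mu>2)" .
  qed
  have "(\<integral>\<^sup>+\<omega>. (SUP h\<in>H. ennreal \<bar>(\<Sum>t<m. Z h t \<omega>) / m - P h\<bar>) \<partial>M) = (\<integral>\<^sup>+\<omega>. \<Phi>1 (X1 \<omega>) \<partial>M)"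
    by (simp add: \<Phi>1_def al_X1)
  also have "\<dots> = (\<integral>\<^sup>+x. \<Phi>1 x \<partial>\<mu>1)"
    unfolding \<mu>1_def by (rule nn_integral_distr[symmetric]) auto
  also have "\<dots> \<le> (\<integral>\<^sup>+x. \<integral>\<^sup>+y. \<Phi> (x, y) \<partial>\<mu>2 \<partial>\<mu>1)"
    by (intro nn_integral_mono pt)
  also have "\<dots> = (\<integral>\<^sup>+z. \<Phi> z \<partial>(\<mu>1 \<Otimes>\<^sub>M \<mu>2))"
    by (rule P2.nn_integral_fst) (simp add: \<mu>1_def \<mu>2_def)
  also have "\<dots> = (\<integral>\<^sup>+z. \<Phi> z \<partial>distr M (arrayM A \<Otimes>\<^sub>M arrayM B) (\<lambda>x. (X1 x, X2 x)))"
    by (simp add: \<mu>1_def \<mu>2_def dist)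
  also have "\<dots> = (\<integral>\<^sup>+\<omega>. \<Phi> (X1 \<omega>, X2 \<omega>) \<partial>M)"
    by (rule nn_integral_distr) auto
  also have "\<dots> = (\<integral>\<^sup>+\<omega>. (SUP h\<in>H. ennreal (\<bar>\<Sum>t<m. Z h t \<omega> - Z h (m + t) \<omega>\<bar> / m)) \<partial>M)"
  proof -
    have "\<bar>al m h (X1 \<omega>) - be m h (X2 \<omega>)\<bar> = \<bar>\<Sum>t<m. Z h t \<omega> - Z h (m + t) \<omega>\<bar> / m" for h \<omega>
      using m by (simp add: al_X1 be_X2 sum_subtractf diff_divide_distrib[symmetric])
    then show ?thesis by (simp add: \<Phi>_def)
  qed
  finally show ?thesis .
qed

end

definition swE :: "nat \<Rightarrow> nat set \<Rightarrow> nat \<Rightarrow> nat" where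
  "swE m E x = (if x \<in> E then m + x else if m \<le> x \<and> x - m \<in> E then x - m else x)"

lemma swE_inv: "E \<subseteq> {..<m} \<Longrightarrow> swE m E (swE m E x) = x"
  unfolding swE_def by auto

lemma bij_swE: "E \<subseteq> {..<m} \<Longrightarrow> bij (swE m E)"
  by (rule bij_betw_byWitness[where f'="swE m E"]) (auto simp: swE_inv)

lemma swE_lo: "E \<subseteq> {..<m} \<Longrightarrow> t < m \<Longrightarrow> swE m E t = (if t \<in> E then m + t else t)"
  unfolding swE_def by auto

lemma swE_hi: "E \<subseteq> {..<m} \<Longrightarrow> t < m \<Longrightarrow> swE m E (m + t) = (if t \<in> E then t else m + t)"
  unfolding swE_def by auto

context core begin

lemma S:
  assumes m: "m > 0"
  shows "(\<integral>\<^sup>+\<omega>. (SUP h\<in>H. ennreal (\<bar>\<Sum>t<m. Z h t \<omega> - Z h (m + t) \<omega>\<bar> / m)) \<partial>M)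
    = (\<integral>\<^sup>+\<omega>. (\<Sum>E\<in>Pow {..<m}. SUP h\<in>H. ennreal (\<bar>\<Sum>t<m. sg E t * (Z h t \<omega> - Z h (m + t) \<omega>)\<bar> / m)) / 2^m \<partial>M)"
proof -
  define \<Psi> :: "(('k \<Rightarrow> nat) \<Rightarrow> nat \<times> (nat \<Rightarrow> real^'l)) \<Rightarrow> ennreal" where
    "\<Psi> = (\<lambda>x. SUP h\<in>H. ennreal (\<bar>\<Sum>t<m. phi h (x (Dg t)) - phi h (x (Dg (m + t)))\<bar> / m))"
  have \<Psi>m[measurable]: "\<Psi> \<in> borel_measurable (arrayM UNIV)"
    unfolding \<Psi>_def
  proof (rule borel_measurable_SUP[OF H_count])
    fix h assume h: "h \<in> H"
    note [measurable] = phi_meas[OF H_meas[OF h]]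
    show "(\<lambda>x. ennreal (\<bar>\<Sum>t<m. phi h (x (Dg t)) - phi h (x (Dg (m + t)))\<bar> / m)) \<in> borel_measurable (arrayM UNIV)"
      by measurable
  qed
  have sw_eq: "\<Psi> (\<lambda>j. arr N Y \<omega> (\<lambda>i. swE m E (j i))) =
      (SUP h\<in>H. ennreal (\<bar>\<Sum>t<m. sg E t * (Z h t \<omega> - Z h (m + t) \<omega>)\<bar> / m))"
    if E: "E \<in> Pow {..<m}" for E \<omega>
  proof -
    have "(\<Sum>t<m. phi h (arr N Y \<omega> (\<lambda>i. swE m E (Dg t i))) - phi h (arr N Y \<omega> (\<lambda>i. swE m E (Dg (m + t) i))))
        = (\<Sum>t<m. sg E t * (Z h t \<omega> - Z h (m + t) \<omega>))" for h
    proof (rule sum.cong[OF refl])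
      fix t assume t: "t \<in> {..<m}"
      have e1: "phi h (arr N Y \<omega> (\<lambda>i. swE m E (Dg t i))) = Z h (swE m E t) \<omega>"
        and e2: "phi h (arr N Y \<omega> (\<lambda>i. swE m E (Dg (m + t) i))) = Z h (swE m E (m + t)) \<omega>"
        by (simp_all add: Z_def Dg_def)
      show "phi h (arr N Y \<omega> (\<lambda>i. swE m E (Dg t i))) - phi h (arr N Y \<omega> (\<lambda>i. swE m E (Dg (m + t) i)))
          = sg E t * (Z h t \<omega> - Z h (m + t) \<omega>)"
        unfolding e1 e2
        using E t by (simp add: swE_lo swE_hi sg_def)
    qed
    then show ?thesis by (simp add: \<Psi>_def)
  qed
  have eqE: "(\<integral>\<^sup>+\<omega>. \<Psi> (\<lambda>j. arr N Y \<omega> (\<lambda>i. swE m E (j i))) \<partial>M) = (\<integral>\<^sup>+\<omega>. \<Psi> (arr N Y \<omega>) \<partial>M)"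
    if E: "E \<in> Pow {..<m}" for E
    by (rule transfer_nn) (use E bij_swE in auto)
  have base: "(\<integral>\<^sup>+\<omega>. \<Psi> (arr N Y \<omega>) \<partial>M) = (\<integral>\<^sup>+\<omega>. (SUP h\<in>H. ennreal (\<bar>\<Sum>t<m. Z h t \<omega> - Z h (m + t) \<omega>\<bar> / m)) \<partial>M)"
    by (simp add: \<Psi>_def Z_def)
  have "(\<integral>\<^sup>+\<omega>. (\<Sum>E\<in>Pow {..<m}. SUP h\<in>H. ennreal (\<bar>\<Sum>t<m. sg E t * (Z h t \<omega> - Z h (m + t) \<omega>)\<bar> / m)) / 2^m \<partial>M)
      = (\<integral>\<^sup>+\<omega>. (\<Sum>E\<in>Pow {..<m}. \<Psi> (\<lambda>j. arr N Y \<omega> (\<lambda>i. swE m E (j i)))) / 2^m \<partial>M)"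
    by (simp add: sw_eq)
  also have "\<dots> = (\<integral>\<^sup>+\<omega>. (\<Sum>E\<in>Pow {..<m}. \<Psi> (\<lambda>j. arr N Y \<omega> (\<lambda>i. swE m E (j i)))) \<partial>M) / 2^m"
    by (rule nn_integral_divide) measurable
  also have "(\<integral>\<^sup>+\<omega>. (\<Sum>E\<in>Pow {..<m}. \<Psi> (\<lambda>j. arr N Y \<omega> (\<lambda>i. swE m E (j i)))) \<partial>M)
      = (\<Sum>E\<in>Pow {..<m}. \<integral>\<^sup>+\<omega>. \<Psi> (\<lambda>j. arr N Y \<omega> (\<lambda>i. swE m E (j i))) \<partial>M)"
    by (rule nn_integral_sum) measurable
  also have "\<dots> = (\<Sum>E\<in>Pow {..<m}. \<integral>\<^sup>+\<omega>. \<Psi> (arr N Y \<omega>) \<partial>M)"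
    by (rule sum.cong[OF refl]) (rule eqE)
  also have "\<dots> = 2^m * (\<integral>\<^sup>+\<omega>. \<Psi> (arr N Y \<omega>) \<partial>M)"
    by (simp add: card_Pow)
  also have "\<dots> / 2^m = (\<integral>\<^sup>+\<omega>. \<Psi> (arr N Y \<omega>) \<partial>M)"
  proof -
    have "(2::ennreal)^m \<noteq> 0" "(2::ennreal)^m \<noteq> top" by (simp_all add: power_eq_top_ennreal)
    then show ?thesis by (metis ennreal_mult_divide_eq mult.commute)
  qed
  finally show ?thesis using base by simp
qed

end

context core begin

definition tailK :: "real \<Rightarrow> nat \<Rightarrow> 'w \<Rightarrow> real" where
  "tailK K t \<omega> = (if Z Fb t \<omega> \<le> K then 0 else Z Fb t \<omega>)"

definition U :: "nat \<Rightarrow> ennreal" where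
  "U m = (\<integral>\<^sup>+\<omega>. (SUP h\<in>H. ennreal \<bar>(\<Sum>t<m. Z h t \<omega>) / m - P h\<bar>) \<partial>M)"

lemma tailK_meas[measurable]: "tailK K t \<in> borel_measurable M"
  unfolding tailK_def by measurable

lemma tailK_int: "integrable M (tailK K t)"
proof (rule Bochner_Integration.integrable_bound[OF Zb_int[of t] tailK_meas])
  show "AE x in M. norm (tailK K t x) \<le> norm (Z Fb t x)"
    by (rule AE_I2) (use Zb_nonneg in \<open>auto simp: tailK_def\<close>)
qed

lemma tailK_same: "expectation (tailK K t) = expectation (tailK K 0)"
proof -
  have "(\<integral>\<omega>. (\<lambda>c. if phi Fb c \<le> K then 0 else phi Fb c) (arr N Y \<omega> (Dg t)) \<partial>M)
      = (\<integral>\<omega>. (\<lambda>c. if phi Fb c \<le> K then 0 else phi Fb c) (arr N Y \<omega> (Dg 0)) \<partial>M)"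
    by (rule cell_same_int) measurable
  then show ?thesis unfolding tailK_def[abs_def] Z_def by simp
qed

lemma U_bound:
  fixes K \<delta> :: real and \<rho> :: "'w \<Rightarrow> real" and Bn :: nat
  assumes m: "m > 0" and K: "K > 0" and dl: "\<delta> > 0"
    and \<rho>_int: "integrable M \<rho>" and \<rho>_nn: "\<And>\<omega>. \<omega> \<in> space M \<Longrightarrow> \<rho> \<omega> \<ge> 0"
    and cov: "\<And>\<omega>. \<omega> \<in> space M \<Longrightarrow> \<exists>V. finite V \<and> card V \<le> Bn \<and> (\<forall>c\<in>V. \<forall>t<2*m. \<bar>c t\<bar> \<le> K) \<and>
        (\<forall>h\<in>H. \<exists>c\<in>V. (\<Sum>t<2*m. \<bar>(if Z Fb t \<omega> \<le> K then Z h t \<omega> else 0) - c t\<bar>) \<le> m * \<rho> \<omega>)"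
  shows "U m \<le> ennreal (2 * expectation (tailK K 0) + expectation \<rho> + \<delta>
                  + 2 * K * (2 * Bn * exp (- real m * \<delta>\<^sup>2 / (8 * K\<^sup>2))))"
proof -
  define c where "c = \<delta> + 2 * K * (2 * Bn * exp (- real m * \<delta>\<^sup>2 / (8 * K\<^sup>2)))"
  define R where "R \<omega> = (\<Sum>t<2*m. tailK K t \<omega>) / m + \<rho> \<omega> + c" for \<omega>
  have c0: "c \<ge> 0" unfolding c_def using K dl by auto
  have pt: "(\<Sum>E\<in>Pow {..<m}. SUP h\<in>H. ennreal (\<bar>\<Sum>t<m. sg E t * (Z h t \<omega> - Z h (m + t) \<omega>)\<bar> / m)) / 2^m
      \<le> ennreal (R \<omega>)" if \<omega>: "\<omega> \<in> space M" for \<omega>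
  proof -
    obtain V where V: "finite V" "card V \<le> Bn" "\<forall>c\<in>V. \<forall>t<2*m. \<bar>c t\<bar> \<le> K"
      "\<forall>h\<in>H. \<exists>c\<in>V. (\<Sum>t<2*m. \<bar>(if Z Fb t \<omega> \<le> K then Z h t \<omega> else 0) - c t\<bar>) \<le> m * \<rho> \<omega>"
      using cov[OF \<omega>] by blast
    have "(\<Sum>E\<in>Pow {..<m}. SUP h\<in>H. ennreal (\<bar>\<Sum>t<m. sg E t * (Z h t \<omega> - Z h (m + t) \<omega>)\<bar> / m))
      \<le> ennreal (2^m * ((\<Sum>t<2*m. if Z Fb t \<omega> \<le> K then 0 else Z Fb t \<omega>) / m + \<rho> \<omega> + \<delta>
          + 2 * K * (2 * card V * exp (- real m * \<delta>\<^sup>2 / (8 * K\<^sup>2)))))"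
    proof (rule key[where a="\<lambda>h t. Z h t \<omega>" and En="\<lambda>t. Z Fb t \<omega>", OF m K dl V(1) \<rho>_nn[OF \<omega>]])
      fix t assume "t < 2*m" show "0 \<le> Z Fb t \<omega>" by (rule Zb_nonneg[OF \<omega>])
    next
      fix g t assume "g \<in> H" "t < 2*m" show "\<bar>Z g t \<omega>\<bar> \<le> Z Fb t \<omega>" by (rule Z_env) fact+
    next
      fix c t assume "c \<in> V" "t < 2*m" then show "\<bar>c t\<bar> \<le> K" using V(3) by blast
    next
      fix g assume "g \<in> H" then show "\<exists>c\<in>V. (\<Sum>t<2*m. \<bar>(if Z Fb t \<omega> \<le> K then Z g t \<omega> else 0) - c t\<bar>) \<le> m * \<rho> \<omega>"
        using V(4) by blast
    qed
    also have "\<dots> \<le> ennreal (2^m * R \<omega>)"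
    proof (rule ennreal_leI, rule mult_left_mono)
      have "2 * K * (2 * real (card V) * exp (- real m * \<delta>\<^sup>2 / (8 * K\<^sup>2)))
          \<le> 2 * K * (2 * real Bn * exp (- real m * \<delta>\<^sup>2 / (8 * K\<^sup>2)))"
        using V(2) K by (intro mult_left_mono mult_right_mono) auto
      then show "(\<Sum>t<2*m. if Z Fb t \<omega> \<le> K then 0 else Z Fb t \<omega>) / m + \<rho> \<omega> + \<delta>
          + 2 * K * (2 * card V * exp (- real m * \<delta>\<^sup>2 / (8 * K\<^sup>2))) \<le> R \<omega>"
        by (simp add: R_def c_def tailK_def)
    qed simp
    also have "\<dots> = 2^m * ennreal (R \<omega>)"
    proof -
      have "ennreal (2^m * R \<omega>) = ennreal (2^m) * ennreal (R \<omega>)" by (rule ennreal_mult') simp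
      moreover have "ennreal ((2::real)^m) = 2^m" using ennreal_power[of 2 m] by simp
      ultimately show ?thesis by simp
    qed
    finally have "(\<Sum>E\<in>Pow {..<m}. SUP h\<in>H. ennreal (\<bar>\<Sum>t<m. sg E t * (Z h t \<omega> - Z h (m + t) \<omega>)\<bar> / m)) / 2^m
        \<le> (2^m * ennreal (R \<omega>)) / 2^m"
      by (rule divide_right_mono_ennreal)
    also have "(2^m * ennreal (R \<omega>)) / 2^m = ennreal (R \<omega>)"
    proof -
      have "(2::ennreal)^m \<noteq> 0" "(2::ennreal)^m \<noteq> top" by (simp_all add: power_eq_top_ennreal)
      then show ?thesis by (metis ennreal_mult_divide_eq mult.commute)
    qed
    finally show ?thesis .
  qed
  have R_int: "integrable M R"
    unfolding R_def using tailK_int \<rho>_int by auto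
  have R_nn: "R \<omega> \<ge> 0" if "\<omega> \<in> space M" for \<omega>
    unfolding R_def using \<rho>_nn[OF that] c0 Zb_nonneg[OF that]
    by (intro add_nonneg_nonneg divide_nonneg_nonneg sum_nonneg) (auto simp: tailK_def)
  have "U m \<le> (\<integral>\<^sup>+\<omega>. (SUP h\<in>H. ennreal (\<bar>\<Sum>t<m. Z h t \<omega> - Z h (m + t) \<omega>\<bar> / m)) \<partial>M)"
    unfolding U_def by (rule J[OF m])
  also have "\<dots> = (\<integral>\<^sup>+\<omega>. (\<Sum>E\<in>Pow {..<m}. SUP h\<in>H. ennreal (\<bar>\<Sum>t<m. sg E t * (Z h t \<omega> - Z h (m + t) \<omega>)\<bar> / m)) / 2^m \<partial>M)"
    by (rule S[OF m])
  also have "\<dots> \<le> (\<integral>\<^sup>+\<omega>. ennreal (R \<omega>) \<partial>M)"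
    by (rule nn_integral_mono) (rule pt)
  also have "\<dots> = ennreal (expectation R)"
    by (rule nn_integral_eq_integral[OF R_int]) (use R_nn in \<open>auto intro: AE_I2\<close>)
  also have "expectation R = (\<Sum>t<2*m. expectation (tailK K t)) / m + expectation \<rho> + c"
    unfolding R_def using tailK_int \<rho>_int prob_space
    by (simp add: Bochner_Integration.integral_sum)
  also have "(\<Sum>t<2*m. expectation (tailK K t)) / m = 2 * expectation (tailK K 0)"
  proof -
    have "(\<Sum>t<2*m. expectation (tailK K t)) = (\<Sum>t<2*m. expectation (tailK K 0))"
      by (intro sum.cong refl tailK_same)
    then show ?thesis using m by simp
  qed
  finally show ?thesis by (simp add: c_def add.assoc)
qed

end

context core begin

lemma tail_small:
  assumes e: "e > 0"
  shows "\<exists>K>0. expectation (tailK K 0) < e"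
proof -
  define s where "s n = tailK (real (Suc n)) 0" for n
  have lim: "(\<lambda>n. expectation (s n)) \<longlonglongrightarrow> expectation (\<lambda>\<omega>. 0)"
  proof (rule integral_dominated_convergence[where w="Z Fb 0"])
    show "(\<lambda>\<omega>. 0::real) \<in> borel_measurable M" by simp
    show "\<And>n. s n \<in> borel_measurable M" unfolding s_def by simp
    show "integrable M (Z Fb 0)" by (rule Zb_int)
    show "AE x in M. (\<lambda>n. s n x) \<longlonglongrightarrow> 0"
    proof (rule AE_I2)
      fix x
      obtain N0 :: nat where "Z Fb 0 x \<le> real N0" using real_arch_simple by blast
      then have "\<forall>n\<ge>N0. s n x = 0" by (auto simp: s_def tailK_def)
      then have "eventually (\<lambda>n. s n x = 0) sequentially" by (auto simp: eventually_sequentially)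
      then show "(\<lambda>n. s n x) \<longlonglongrightarrow> 0" by (rule tendsto_eventually)
    qed
    show "\<And>n. AE x in M. norm (s n x) \<le> Z Fb 0 x"
      by (rule AE_I2) (use Zb_nonneg in \<open>auto simp: s_def tailK_def\<close>)
  qed
  then have "eventually (\<lambda>n. expectation (s n) < e) sequentially"
    using e by (intro order_tendstoD(2)[OF lim]) simp
  then obtain n where "expectation (s n) < e" by (auto simp: eventually_sequentially)
  then show ?thesis unfolding s_def by (intro exI[of _ "real (Suc n)"]) auto
qed

lemma U_tendsto:
  assumes cov: "\<And>K e. K > 0 \<Longrightarrow> e > 0 \<Longrightarrow> \<exists>(Bn::nat) (\<rho>::nat \<Rightarrow> 'w \<Rightarrow> real). \<forall>m>0.
      integrable M (\<rho> m) \<and> (\<forall>\<omega>\<in>space M. \<rho> m \<omega> \<ge> 0) \<and> expectation (\<rho> m) \<le> e \<and>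
      (\<forall>\<omega>\<in>space M. \<exists>V. finite V \<and> card V \<le> Bn \<and> (\<forall>c\<in>V. \<forall>t<2*m. \<bar>c t\<bar> \<le> K) \<and>
        (\<forall>h\<in>H. \<exists>c\<in>V. (\<Sum>t<2*m. \<bar>(if Z Fb t \<omega> \<le> K then Z h t \<omega> else 0) - c t\<bar>) \<le> m * \<rho> m \<omega>))"
  shows "U \<longlonglongrightarrow> 0"
proof (rule order_tendstoI)
  fix a :: ennreal assume "a < 0" then show "eventually (\<lambda>m. a < U m) sequentially" by simp
next
  fix a :: ennreal assume a: "0 < a"
  obtain b where b: "0 < b" "b < a" using dense[OF a] by blast
  then have "b < top" using top.not_eq_extremum by fastforce
  then obtain e where e: "b = ennreal e" "e > 0" using b(1)
    by (cases b) (auto simp: ennreal_less_zero_iff)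
  define e4 where "e4 = e / 4"
  have e4: "e4 > 0" using e by (simp add: e4_def)
  obtain K where K: "K > 0" "expectation (tailK K 0) < e4 / 2"
    using tail_small[of "e4/2"] e4 by auto
  obtain Bn \<rho> where B: "\<And>m. m > 0 \<Longrightarrow> integrable M (\<rho> m) \<and> (\<forall>\<omega>\<in>space M. \<rho> m \<omega> \<ge> 0) \<and> expectation (\<rho> m) \<le> e4 \<and>
      (\<forall>\<omega>\<in>space M. \<exists>V. finite V \<and> card V \<le> Bn \<and> (\<forall>c\<in>V. \<forall>t<2*m. \<bar>c t\<bar> \<le> K) \<and>
        (\<forall>h\<in>H. \<exists>c\<in>V. (\<Sum>t<2*m. \<bar>(if Z Fb t \<omega> \<le> K then Z h t \<omega> else 0) - c t\<bar>) \<le> m * \<rho> m \<omega>))"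
    using cov[OF K(1) e4] by blast
  define q where "q = exp (- (e4\<^sup>2 / (8 * K\<^sup>2)))"
  have q: "norm q < 1" using e4 K by (simp add: q_def)
  have ex: "exp (- real m * e4\<^sup>2 / (8 * K\<^sup>2)) = q ^ m" for m
    unfolding q_def by (subst exp_of_nat_mult[symmetric]) (simp add: field_simps)
  have tl: "(\<lambda>m. 2 * K * (2 * real Bn * exp (- real m * e4\<^sup>2 / (8 * K\<^sup>2)))) \<longlonglongrightarrow> 2 * K * (2 * real Bn * 0)"
    unfolding ex by (intro tendsto_intros q)
  have ev1: "eventually (\<lambda>m. 2 * K * (2 * real Bn * exp (- real m * e4\<^sup>2 / (8 * K\<^sup>2))) < e4) sequentially"
    using e4 by (intro order_tendstoD(2)[OF tl]) simp
  have ev2: "eventually (\<lambda>m::nat. m > 0) sequentially" by (rule eventually_gt_at_top)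
  show "eventually (\<lambda>m. U m < a) sequentially"
    using ev1 ev2
  proof eventually_elim
    case (elim m)
    have Bm: "integrable M (\<rho> m)" "\<forall>\<omega>\<in>space M. \<rho> m \<omega> \<ge> 0" "expectation (\<rho> m) \<le> e4" using B[OF elim(2)] by auto
    have "U m \<le> ennreal (2 * expectation (tailK K 0) + expectation (\<rho> m) + e4
                  + 2 * K * (2 * Bn * exp (- real m * e4\<^sup>2 / (8 * K\<^sup>2))))"
      by (rule U_bound[OF elim(2) K(1) e4 Bm(1)]) (use Bm(2) B[OF elim(2)] in auto)
    also have "\<dots> < ennreal e"
      using K(2) Bm(3) elim(1) e by (intro ennreal_lessI) (auto simp: e4_def)
    also have "\<dots> < a" using b e by simp
    finally show ?case .
  qed
qed

end

context arrset begin

lemma Z_nonneg: "(\<And>y. y \<in> Ycal \<Longrightarrow> g y \<ge> 0) \<Longrightarrow> \<omega> \<in> space M \<Longrightarrow> Z g t \<omega> \<ge> 0"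
  unfolding Z_alt by (intro sum_nonneg) (auto intro: Y_in)

lemma Z_diff_bound:
  assumes "\<omega> \<in> space M" "\<And>y. y \<in> Ycal \<Longrightarrow> \<bar>h y - f y\<bar> \<le> w y"
  shows "\<bar>Z h t \<omega> - Z f t \<omega>\<bar> \<le> Z w t \<omega>"
proof -
  have "\<bar>Z h t \<omega> - Z f t \<omega>\<bar> = \<bar>\<Sum>l<N (Dg t) \<omega>. h (Y (Dg t) l \<omega>) - f (Y (Dg t) l \<omega>)\<bar>"
    by (simp add: Z_alt sum_subtractf)
  also have "\<dots> \<le> (\<Sum>l<N (Dg t) \<omega>. \<bar>h (Y (Dg t) l \<omega>) - f (Y (Dg t) l \<omega>)\<bar>)" by (rule sum_abs)
  also have "\<dots> \<le> Z w t \<omega>" unfolding Z_alt by (rule sum_mono) (use assms Y_in in auto)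
  finally show ?thesis .
qed

lemma Zg_int:
  assumes g[measurable]: "g \<in> borel_measurable borel" and g0: "\<And>y. y \<in> Ycal \<Longrightarrow> g y \<ge> 0"
    and gi: "integrable M (Z g 0)"
  shows "integrable M (Z g t)" "expectation (Z g t) = expectation (Z g 0)"
proof -
  have "(\<integral>\<^sup>+\<omega>. ennreal (Z g t \<omega>) \<partial>M) = (\<integral>\<^sup>+\<omega>. ennreal (Z g 0 \<omega>) \<partial>M)"
    unfolding Z_def by (rule cell_same_nn[where \<psi>="\<lambda>c. ennreal (phi g c)"]) measurable
  also have "\<dots> < \<infinity>"
  proof -
    have "(\<integral>\<^sup>+\<omega>. ennreal (Z g 0 \<omega>) \<partial>M) = ennreal (expectation (Z g 0))"
      by (rule nn_integral_eq_integral[OF gi]) (use Z_nonneg[OF g0] in \<open>auto intro: AE_I2\<close>)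
    then show ?thesis by simp
  qed
  finally have fin: "(\<integral>\<^sup>+\<omega>. ennreal (Z g t \<omega>) \<partial>M) < \<infinity>" .
  show "integrable M (Z g t)"
  proof (rule integrableI_bounded)
    show "Z g t \<in> borel_measurable M" by measurable
    have "(\<integral>\<^sup>+\<omega>. ennreal (norm (Z g t \<omega>)) \<partial>M) = (\<integral>\<^sup>+\<omega>. ennreal (Z g t \<omega>) \<partial>M)"
      by (rule nn_integral_cong) (simp add: Z_nonneg[OF g0])
    then show "(\<integral>\<^sup>+\<omega>. ennreal (norm (Z g t \<omega>)) \<partial>M) < \<infinity>" using fin by simp
  qed
  show "expectation (Z g t) = expectation (Z g 0)"
    unfolding Z_def by (rule cell_same_int) measurable
qed

end

context core begin

lemma cov_ii:
  assumes w[measurable]: "w \<in> borel_measurable borel" and w0: "\<And>y. y \<in> Ycal \<Longrightarrow> w y \<ge> 0"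
    and wi: "integrable M (Z w 0)"
    and brk: "\<And>\<epsilon>. \<epsilon> > 0 \<Longrightarrow> \<exists>G0. finite G0 \<and> (\<forall>f\<in>G0. \<forall>y\<in>Ycal. \<bar>f y\<bar> \<le> Fb y) \<and>
                  (\<forall>h\<in>H. \<exists>f\<in>G0. \<forall>y\<in>Ycal. \<bar>h y - f y\<bar> \<le> \<epsilon> * w y)"
    and K: "K > 0" and e: "e > 0"
  shows "\<exists>(Bn::nat) (\<rho>::nat \<Rightarrow> 'w \<Rightarrow> real). \<forall>m>0.
      integrable M (\<rho> m) \<and> (\<forall>\<omega>\<in>space M. \<rho> m \<omega> \<ge> 0) \<and> expectation (\<rho> m) \<le> e \<and>
      (\<forall>\<omega>\<in>space M. \<exists>V. finite V \<and> card V \<le> Bn \<and> (\<forall>c\<in>V. \<forall>t<2*m. \<bar>c t\<bar> \<le> K) \<and>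
        (\<forall>h\<in>H. \<exists>c\<in>V. (\<Sum>t<2*m. \<bar>(if Z Fb t \<omega> \<le> K then Z h t \<omega> else 0) - c t\<bar>) \<le> m * \<rho> m \<omega>))"
proof -
  define Ew where "Ew = expectation (Z w 0)"
  have Ew0: "Ew \<ge> 0" unfolding Ew_def by (rule integral_nonneg_AE) (use Z_nonneg[OF w0] in \<open>auto intro: AE_I2\<close>)
  define \<epsilon> where "\<epsilon> = e / (2 * (Ew + 1))"
  have \<epsilon>: "\<epsilon> > 0" using e Ew0 by (simp add: \<epsilon>_def)
  obtain G0 where G0: "finite G0" "\<forall>f\<in>G0. \<forall>y\<in>Ycal. \<bar>f y\<bar> \<le> Fb y"
      "\<forall>h\<in>H. \<exists>f\<in>G0. \<forall>y\<in>Ycal. \<bar>h y - f y\<bar> \<le> \<epsilon> * w y"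
    using brk[OF \<epsilon>] by blast
  define \<rho> where "\<rho> m \<omega> = \<epsilon> * (\<Sum>t<2*m. Z w t \<omega>) / m" for m \<omega>
  have wi': "integrable M (Z w t)" "expectation (Z w t) = Ew" for t
    using Zg_int[OF w w0 wi] by (auto simp: Ew_def)
  show ?thesis
  proof (intro exI[of _ "card G0"] exI[of _ \<rho>] allI impI conjI ballI)
    fix m :: nat assume m: "m > 0"
    show "integrable M (\<rho> m)" unfolding \<rho>_def[abs_def] using wi' by auto
    show "\<rho> m \<omega> \<ge> 0" if "\<omega> \<in> space M" for \<omega>
      unfolding \<rho>_def using \<epsilon> Z_nonneg[OF w0 that]
      by (intro divide_nonneg_nonneg mult_nonneg_nonneg sum_nonneg) auto
    have "expectation (\<rho> m) = \<epsilon> * (\<Sum>t<2*m. expectation (Z w t)) / m"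
      unfolding \<rho>_def[abs_def] using wi' by (simp add: Bochner_Integration.integral_sum)
    also have "\<dots> = 2 * \<epsilon> * Ew" using m by (simp add: wi'(2))
    also have "\<dots> \<le> e"
    proof -
      have "2 * \<epsilon> * Ew = e * (Ew / (Ew + 1))" using Ew0 by (simp add: \<epsilon>_def field_simps)
      also have "\<dots> \<le> e * 1" using e Ew0 by (intro mult_left_mono) auto
      finally show ?thesis by simp
    qed
    finally show "expectation (\<rho> m) \<le> e" .
    fix \<omega> assume \<omega>: "\<omega> \<in> space M"
    define b where "b f t = (if Z Fb t \<omega> \<le> K then Z f t \<omega> else 0)" for f t
    define V where "V = b ` G0"
    have Zf: "\<bar>Z f t \<omega>\<bar> \<le> Z Fb t \<omega>" if "f \<in> G0" for f t
      unfolding Z_alt using G0(2) that \<omega> Y_in by (intro order.trans[OF sum_abs sum_mono]) auto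
    show "\<exists>V. finite V \<and> card V \<le> card G0 \<and> (\<forall>c\<in>V. \<forall>t<2*m. \<bar>c t\<bar> \<le> K) \<and>
        (\<forall>h\<in>H. \<exists>c\<in>V. (\<Sum>t<2*m. \<bar>(if Z Fb t \<omega> \<le> K then Z h t \<omega> else 0) - c t\<bar>) \<le> m * \<rho> m \<omega>)"
    proof (intro exI[of _ V] conjI ballI allI impI)
      show "finite V" "card V \<le> card G0" unfolding V_def using G0(1) by (auto intro: card_image_le)
      fix c t assume "c \<in> V" "t < 2*m"
      then obtain f where "f \<in> G0" "c = b f" by (auto simp: V_def)
      then show "\<bar>c t\<bar> \<le> K" using Zf[of f t] K by (auto simp: b_def)
    next
      fix h assume h: "h \<in> H"
      obtain f where f: "f \<in> G0" "\<forall>y\<in>Ycal. \<bar>h y - f y\<bar> \<le> \<epsilon> * w y" using G0(3) h by blast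
      have "(\<Sum>t<2*m. \<bar>(if Z Fb t \<omega> \<le> K then Z h t \<omega> else 0) - b f t\<bar>) \<le> (\<Sum>t<2*m. \<epsilon> * Z w t \<omega>)"
      proof (rule sum_mono)
        fix t
        have "\<bar>Z h t \<omega> - Z f t \<omega>\<bar> \<le> Z (\<lambda>y. \<epsilon> * w y) t \<omega>"
          by (rule Z_diff_bound[OF \<omega>]) (use f in auto)
        also have "Z (\<lambda>y. \<epsilon> * w y) t \<omega> = \<epsilon> * Z w t \<omega>" by (simp add: Z_alt sum_distrib_left)
        finally show "\<bar>(if Z Fb t \<omega> \<le> K then Z h t \<omega> else 0) - b f t\<bar> \<le> \<epsilon> * Z w t \<omega>"
          using \<epsilon> Z_nonneg[OF w0 \<omega>, where t=t] by (auto simp: b_def)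
      qed
      also have "\<dots> = m * \<rho> m \<omega>" using m by (simp add: \<rho>_def sum_distrib_left[symmetric])
      finally show "\<exists>c\<in>V. (\<Sum>t<2*m. \<bar>(if Z Fb t \<omega> \<le> K then Z h t \<omega> else 0) - c t\<bar>) \<le> m * \<rho> m \<omega>"
        using f(1) by (auto simp: V_def)
    qed
  qed
qed


lemma cov_i:
  assumes unif: "\<And>\<eta>. \<eta> > 0 \<Longrightarrow> \<exists>B::nat. \<forall>Q::(real^'l) pmf. finite (set_pmf Q) \<and> set_pmf Q \<subseteq> Ycal \<longrightarrow>
       (\<exists>G0. finite G0 \<and> card G0 \<le> B \<and> (\<forall>f\<in>G0. \<forall>y\<in>Ycal. \<bar>f y\<bar> \<le> Fb y) \<and>
          (\<forall>h\<in>H. \<exists>f\<in>G0. L1Q Q (\<lambda>y. h y - f y) \<le> \<eta> * L1Q Q Fb))"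
    and K: "K > 0" and e: "e > 0"
  shows "\<exists>(Bn::nat) (\<rho>::nat \<Rightarrow> 'w \<Rightarrow> real). \<forall>m>0.
      integrable M (\<rho> m) \<and> (\<forall>\<omega>\<in>space M. \<rho> m \<omega> \<ge> 0) \<and> expectation (\<rho> m) \<le> e \<and>
      (\<forall>\<omega>\<in>space M. \<exists>V. finite V \<and> card V \<le> Bn \<and> (\<forall>c\<in>V. \<forall>t<2*m. \<bar>c t\<bar> \<le> K) \<and>
        (\<forall>h\<in>H. \<exists>c\<in>V. (\<Sum>t<2*m. \<bar>(if Z Fb t \<omega> \<le> K then Z h t \<omega> else 0) - c t\<bar>) \<le> m * \<rho> m \<omega>))"
proof -
  define \<eta> where "\<eta> = e / (2 * K)"
  have \<eta>: "\<eta> > 0" using e K by (simp add: \<eta>_def)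
  from unif[OF \<eta>] obtain B :: nat where B0: "\<forall>Q::(real^'l) pmf. finite (set_pmf Q) \<and> set_pmf Q \<subseteq> Ycal \<longrightarrow>
       (\<exists>G0. finite G0 \<and> card G0 \<le> B \<and> (\<forall>f\<in>G0. \<forall>y\<in>Ycal. \<bar>f y\<bar> \<le> Fb y) \<and>
          (\<forall>h\<in>H. \<exists>f\<in>G0. L1Q Q (\<lambda>y. h y - f y) \<le> \<eta> * L1Q Q Fb))" ..
  have B: "\<exists>G0. finite G0 \<and> card G0 \<le> B \<and> (\<forall>f\<in>G0. \<forall>y\<in>Ycal. \<bar>f y\<bar> \<le> Fb y) \<and>
          (\<forall>h\<in>H. \<exists>f\<in>G0. L1Q Q (\<lambda>y. h y - f y) \<le> \<eta> * L1Q Q Fb)"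
    if "finite (set_pmf Q)" "set_pmf Q \<subseteq> Ycal" for Q
    using B0 that by simp
  show ?thesis
  proof (intro exI[of _ "max B 1"] exI[of _ "\<lambda>m \<omega>. e"] allI impI conjI ballI)
    fix m :: nat assume m: "m > 0"
    show "integrable M (\<lambda>\<omega>. e)" by simp
    show "0 \<le> e" using e by simp
    show "expectation (\<lambda>\<omega>. e) \<le> e" by (simp add: prob_space)
    fix \<omega> assume \<omega>: "\<omega> \<in> space M"
    define T where "T = {t. t < 2*m \<and> Z Fb t \<omega> \<le> K}"
    define I where "I = Sigma T (\<lambda>t. {..<N (Dg t) \<omega>})"
    define yy where "yy p = Y (Dg (fst p)) (snd p) \<omega>" for p
    define b where "b f t = (if Z Fb t \<omega> \<le> K then Z f t \<omega> else 0)" for f t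
    have T: "finite T" "T \<subseteq> {..<2*m}" by (auto simp: T_def)
    have I: "finite I" unfolding I_def using T by auto
    have sumT: "(\<Sum>t<2*m. \<bar>b h t - b f t\<bar>) = (\<Sum>t\<in>T. \<bar>Z h t \<omega> - Z f t \<omega>\<bar>)" for h f
    proof -
      have "(\<Sum>t<2*m. \<bar>b h t - b f t\<bar>) = (\<Sum>t<2*m. if t \<in> T then \<bar>Z h t \<omega> - Z f t \<omega>\<bar> else 0)"
        by (rule sum.cong) (auto simp: b_def T_def)
      also have "\<dots> = (\<Sum>t\<in>T. \<bar>Z h t \<omega> - Z f t \<omega>\<bar>)"
        using T by (simp add: sum.If_cases Int_absorb1)
      finally show ?thesis .
    qed
    have sumI: "(\<Sum>t\<in>T. \<Sum>l<N (Dg t) \<omega>. g (yy (t, l))) = (\<Sum>p\<in>I. g (yy p))" for g :: "real^'l \<Rightarrow> real"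
      unfolding I_def using T by (subst sum.Sigma) auto
    show "\<exists>V. finite V \<and> card V \<le> max B 1 \<and> (\<forall>c\<in>V. \<forall>t<2*m. \<bar>c t\<bar> \<le> K) \<and>
        (\<forall>h\<in>H. \<exists>c\<in>V. (\<Sum>t<2*m. \<bar>(if Z Fb t \<omega> \<le> K then Z h t \<omega> else 0) - c t\<bar>) \<le> m * e)"
    proof (cases "I = {}")
      case True
      have N0: "N (Dg t) \<omega> = 0" if "t \<in> T" for t
      proof -
        have "Sigma T (\<lambda>t. {..<N (Dg t) \<omega>}) = {}" using True unfolding I_def .
        then have "{..<N (Dg t) \<omega>} = {}" using that by (simp add: Sigma_empty_iff)
        then show ?thesis by (metis empty_iff lessThan_iff not_gr_zero)
      qed
      show ?thesis
      proof (intro exI[of _ "{\<lambda>_. 0}"] conjI ballI allI impI)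
        fix h assume h: "h \<in> H"
        have "(\<Sum>t<2*m. \<bar>(if Z Fb t \<omega> \<le> K then Z h t \<omega> else 0) - 0\<bar>) = 0"
        proof (rule sum.neutral, rule ballI)
          fix t assume t: "t \<in> {..<2*m}"
          show "\<bar>(if Z Fb t \<omega> \<le> K then Z h t \<omega> else 0) - 0\<bar> = 0"
          proof (cases "Z Fb t \<omega> \<le> K")
            case True
            then have "t \<in> T" using t by (simp add: T_def)
            then have "N (Dg t) \<omega> = 0" by (rule N0)
            then show ?thesis using True by (simp add: Z_alt)
          qed simp
        qed
        then show "\<exists>c\<in>{\<lambda>_. 0}. (\<Sum>t<2*m. \<bar>(if Z Fb t \<omega> \<le> K then Z h t \<omega> else 0) - c t\<bar>) \<le> m * e"
          using e by simp
      qed (use K in auto)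
    next
      case False
      define Q where "Q = map_pmf yy (pmf_of_set I)"
      have setQ: "set_pmf Q = yy ` I" unfolding Q_def using False I by simp
      have L1: "L1Q Q g = (\<Sum>p\<in>I. \<bar>g (yy p)\<bar>) / card I" for g
        unfolding L1Q_def Q_def using False I by (simp add: integral_pmf_of_set)
      have fQ: "finite (set_pmf Q)" using setQ I by simp
      have sQ: "set_pmf Q \<subseteq> Ycal" using setQ Y_in[OF \<omega>] by (auto simp: yy_def)
      from B[OF fQ sQ] obtain G0 where G0c: "finite G0 \<and> card G0 \<le> B \<and> (\<forall>f\<in>G0. \<forall>y\<in>Ycal. \<bar>f y\<bar> \<le> Fb y) \<and>
          (\<forall>h\<in>H. \<exists>f\<in>G0. L1Q Q (\<lambda>y. h y - f y) \<le> \<eta> * L1Q Q Fb)" ..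
      have G0: "finite G0" "card G0 \<le> B" "\<forall>f\<in>G0. \<forall>y\<in>Ycal. \<bar>f y\<bar> \<le> Fb y"
        "\<forall>h\<in>H. \<exists>f\<in>G0. L1Q Q (\<lambda>y. h y - f y) \<le> \<eta> * L1Q Q Fb"
        using G0c by auto
      have Zf: "\<bar>Z f t \<omega>\<bar> \<le> Z Fb t \<omega>" if "f \<in> G0" for f t
        unfolding Z_alt using G0(3) that \<omega> Y_in by (intro order.trans[OF sum_abs sum_mono]) auto
      show ?thesis
      proof (intro exI[of _ "b ` G0"] conjI ballI allI impI)
        show "finite (b ` G0)" using G0(1) by simp
        show "card (b ` G0) \<le> max B 1" using G0(2) card_image_le[OF G0(1), of b] by simp
        fix c t assume "c \<in> b ` G0" "t < 2*m"
        then obtain f where "f \<in> G0" "c = b f" by auto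
        then show "\<bar>c t\<bar> \<le> K" using Zf[of f t] K by (auto simp: b_def)
      next
        fix h assume h: "h \<in> H"
        obtain f where f: "f \<in> G0" "L1Q Q (\<lambda>y. h y - f y) \<le> \<eta> * L1Q Q Fb" using G0(4) h by blast
        have cI: "real (card I) > 0" using False I by (simp add: card_gt_0_iff)
        have "(\<Sum>t<2*m. \<bar>b h t - b f t\<bar>) = (\<Sum>t\<in>T. \<bar>Z h t \<omega> - Z f t \<omega>\<bar>)" by (rule sumT)
        also have "\<dots> \<le> (\<Sum>t\<in>T. \<Sum>l<N (Dg t) \<omega>. \<bar>h (yy (t, l)) - f (yy (t, l))\<bar>)"
        proof (rule sum_mono)
          fix t assume "t \<in> T"
          have "\<bar>Z h t \<omega> - Z f t \<omega>\<bar> \<le> Z (\<lambda>y. \<bar>h y - f y\<bar>) t \<omega>"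
            by (rule Z_diff_bound[OF \<omega>]) auto
          then show "\<bar>Z h t \<omega> - Z f t \<omega>\<bar> \<le> (\<Sum>l<N (Dg t) \<omega>. \<bar>h (yy (t, l)) - f (yy (t, l))\<bar>)"
            by (simp add: Z_alt yy_def)
        qed
        also have "\<dots> = (\<Sum>p\<in>I. \<bar>h (yy p) - f (yy p)\<bar>)" by (rule sumI)
        also have "\<dots> = card I * L1Q Q (\<lambda>y. h y - f y)" using cI by (simp add: L1)
        also have "\<dots> \<le> card I * (\<eta> * L1Q Q Fb)" using f(2) by (intro mult_left_mono) auto
        also have "\<dots> = \<eta> * (\<Sum>p\<in>I. \<bar>Fb (yy p)\<bar>)" using cI by (simp add: L1)
        also have "(\<Sum>p\<in>I. \<bar>Fb (yy p)\<bar>) = (\<Sum>t\<in>T. Z Fb t \<omega>)"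
        proof -
          have "(\<Sum>p\<in>I. \<bar>Fb (yy p)\<bar>) = (\<Sum>t\<in>T. \<Sum>l<N (Dg t) \<omega>. \<bar>Fb (yy (t, l))\<bar>)" by (rule sumI[symmetric])
          also have "\<dots> = (\<Sum>t\<in>T. Z Fb t \<omega>)"
            unfolding Z_alt yy_def using Fb_nonneg Y_in[OF \<omega>] by (intro sum.cong refl) simp
          finally show ?thesis .
        qed
        also have "(\<Sum>t\<in>T. Z Fb t \<omega>) \<le> (\<Sum>t\<in>T. K)" by (rule sum_mono) (simp add: T_def)
        also have "\<dots> \<le> 2 * m * K"
        proof -
          have "card T \<le> card {..<2*m}" using T by (intro card_mono) auto
          then show ?thesis using K by (simp add: mult_right_mono)
        qed
        finally have "(\<Sum>t<2*m. \<bar>b h t - b f t\<bar>) \<le> \<eta> * (2 * m * K)" using \<eta> by (simp add: mult_left_mono)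
        also have "\<eta> * (2 * m * K) = m * e" using K by (simp add: \<eta>_def field_simps)
        finally show "\<exists>c\<in>b ` G0. (\<Sum>t<2*m. \<bar>(if Z Fb t \<omega> \<le> K then Z h t \<omega> else 0) - c t\<bar>) \<le> m * e"
          using f(1) by (auto simp: b_def)
      qed
    qed
  qed
qed

end

lemma rot_cancel: "(c::nat) > 0 \<Longrightarrow> x < c \<Longrightarrow> ((x + t) mod c + (c - t mod c)) mod c = x"
proof -
  assume c: "c > 0" and x: "x < c"
  have tm: "t mod c < c" using c by simp
  have "((x + t) mod c + (c - t mod c)) mod c = (x + t + (c - t mod c)) mod c"
    by (simp add: mod_add_left_eq)
  also have "x + t + (c - t mod c) = x + c * (t div c) + c"
    using tm mult_div_mod_eq[of c t] by linarith
  also have "(x + c * (t div c) + c) mod c = x" using x by simp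
  finally show ?thesis .
qed

lemma rot_cancel2: "(c::nat) > 0 \<Longrightarrow> x < c \<Longrightarrow> ((x + (c - t mod c)) mod c + t) mod c = x"
proof -
  assume c: "c > 0" and x: "x < c"
  have tm: "t mod c < c" using c by simp
  have "((x + (c - t mod c)) mod c + t) mod c = (x + (c - t mod c) + t) mod c"
    by (simp add: mod_add_left_eq)
  also have "x + (c - t mod c) + t = x + c * (t div c) + c"
    using tm mult_div_mod_eq[of c t] by linarith
  also have "(x + c * (t div c) + c) mod c = x" using x by simp
  finally show ?thesis .
qed

definition rot :: "nat \<Rightarrow> nat \<Rightarrow> nat \<Rightarrow> nat" where
  "rot c a x = (if x < c then (a + x) mod c else x)"

lemma bij_rot: assumes c: "c > 0" shows "bij (rot c a)"
proof (rule bij_betw_byWitness[where f'="\<lambda>x. if x < c then (x + (c - a mod c)) mod c else x"])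
  show "\<forall>x\<in>UNIV. (if rot c a x < c then (rot c a x + (c - a mod c)) mod c else rot c a x) = x"
  proof
    fix x :: nat
    show "(if rot c a x < c then (rot c a x + (c - a mod c)) mod c else rot c a x) = x"
    proof (cases "x < c")
      case True
      then have "rot c a x = (x + a) mod c" by (simp add: rot_def add.commute)
      then show ?thesis using rot_cancel[OF c True, of a] c by simp
    qed (simp add: rot_def)
  qed
  show "\<forall>y\<in>UNIV. rot c a (if y < c then (y + (c - a mod c)) mod c else y) = y"
  proof
    fix y :: nat
    show "rot c a (if y < c then (y + (c - a mod c)) mod c else y) = y"
    proof (cases "y < c")
      case True
      have "(y + (c - a mod c)) mod c < c" using c by simp
      then have "rot c a ((y + (c - a mod c)) mod c) = ((y + (c - a mod c)) mod c + a) mod c"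
        by (simp add: rot_def add.commute)
      then show ?thesis using rot_cancel2[OF c True, of a] True by simp
    qed (simp add: rot_def)
  qed
qed auto

lemma grid_eq: "{j::'k::finite \<Rightarrow> nat. \<forall>i. j i < C i} = (\<Pi>\<^sub>E i\<in>UNIV. {..<C i})"
  by (auto simp: PiE_UNIV_domain Pi_def)

lemma grid_finite: "finite {j::'k::finite \<Rightarrow> nat. \<forall>i. j i < C i}"
  unfolding grid_eq by (rule finite_PiE) auto

lemma grid_card: "card {j::'k::finite \<Rightarrow> nat. \<forall>i. j i < C i} = (\<Prod>i\<in>UNIV. C i)"
  unfolding grid_eq by (subst card_PiE) auto

lemma grid_shift:
  fixes C :: "'k::finite \<Rightarrow> nat"
  assumes C: "\<forall>i. C i > 0"
  shows "(\<Sum>a\<in>{j. \<forall>i. j i < C i}. F (\<lambda>i. (a i + t) mod C i)) = (\<Sum>j\<in>{j. \<forall>i. j i < C i}. F j)"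
proof (rule sum.reindex_bij_betw)
  show "bij_betw (\<lambda>a i. (a i + t) mod C i) {j. \<forall>i. j i < C i} {j. \<forall>i. j i < C i}"
  proof (rule bij_betw_byWitness[where f'="\<lambda>j i. (j i + (C i - t mod C i)) mod C i"])
    show "\<forall>a\<in>{j. \<forall>i. j i < C i}. (\<lambda>i. ((a i + t) mod C i + (C i - t mod C i)) mod C i) = a"
      by (intro ballI ext, rule rot_cancel) (use C in auto)
    show "\<forall>a\<in>{j. \<forall>i. j i < C i}. (\<lambda>i. ((a i + (C i - t mod C i)) mod C i + t) mod C i) = a"
      by (intro ballI ext, rule rot_cancel2) (use C in auto)
  qed (use C in auto)
qed

context core begin

lemma grid_bound:
  fixes C :: "'k \<Rightarrow> nat"
  assumes m: "m > 0" and Cm: "\<forall>i. C i \<ge> m"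
  shows "(\<integral>\<^sup>+\<omega>. (SUP h\<in>H. ennreal \<bar>(\<Sum>j\<in>{j. \<forall>i. j i < C i}. phi h (arr N Y \<omega> j)) / real (\<Prod>i\<in>UNIV. C i) - P h\<bar>) \<partial>M)
    \<le> U m"
proof -
  define Gr where "Gr = {j::'k \<Rightarrow> nat. \<forall>i. j i < C i}"
  have C0: "\<forall>i. C i > 0" using m Cm by (auto intro: less_le_trans)
  have Grf: "finite Gr" unfolding Gr_def by (rule grid_finite)
  have cG: "card Gr = (\<Prod>i\<in>UNIV. C i)" unfolding Gr_def by (rule grid_card)
  define c where "c = real (\<Prod>i\<in>UNIV. C i)"
  have c0: "c > 0" unfolding c_def using C0 by (simp add: prod_pos)
  define pa where "pa a i = rot (C i) (a i)" for a :: "'k \<Rightarrow> nat" and i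
  have bij_pa: "\<forall>i. bij (pa a i)" for a unfolding pa_def using C0 by (auto intro: bij_rot)
  have pa_D: "(\<lambda>i. pa a i (Dg t i)) = (\<lambda>i. (a i + t) mod C i)" if "t < m" for a t
  proof
    fix i
    have "t < C i" using that Cm less_le_trans by blast
    then show "pa a i (Dg t i) = (a i + t) mod C i" by (simp add: pa_def rot_def Dg_def)
  qed
  define B where "B a h \<omega> = (\<Sum>t<m. phi h (arr N Y \<omega> (\<lambda>i. (a i + t) mod C i))) / m" for a h \<omega>
  define S where "S a \<omega> = (SUP h\<in>H. ennreal \<bar>B a h \<omega> - P h\<bar>)" for a \<omega>
  have avg: "(\<Sum>j\<in>Gr. phi h (arr N Y \<omega> j)) / c - P h = (\<Sum>a\<in>Gr. B a h \<omega> - P h) / c" for h \<omega>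
  proof -
    have "(\<Sum>a\<in>Gr. B a h \<omega>) = (\<Sum>t<m. \<Sum>a\<in>Gr. phi h (arr N Y \<omega> (\<lambda>i. (a i + t) mod C i))) / m"
      unfolding B_def by (simp add: sum_divide_distrib[symmetric] sum.swap[of _ Gr])
    also have "\<dots> = (\<Sum>t<m. \<Sum>j\<in>Gr. phi h (arr N Y \<omega> j)) / m"
    proof -
      have gs: "(\<Sum>a\<in>Gr. phi h (arr N Y \<omega> (\<lambda>i. (a i + t) mod C i))) = (\<Sum>j\<in>Gr. phi h (arr N Y \<omega> j))" for t
        using grid_shift[OF C0, of "\<lambda>j. phi h (arr N Y \<omega> j)" t] unfolding Gr_def by simp
      show ?thesis by (simp only: gs)
    qed
    also have "\<dots> = (\<Sum>j\<in>Gr. phi h (arr N Y \<omega> j))" using m by simp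
    finally have "(\<Sum>a\<in>Gr. B a h \<omega>) = (\<Sum>j\<in>Gr. phi h (arr N Y \<omega> j))" .
    moreover have "(\<Sum>a\<in>Gr. P h) = c * P h" using cG by (simp add: c_def)
    ultimately show ?thesis using c0 by (simp add: sum_subtractf field_simps)
  qed
  have pt: "(SUP h\<in>H. ennreal \<bar>(\<Sum>j\<in>Gr. phi h (arr N Y \<omega> j)) / c - P h\<bar>) \<le> (\<Sum>a\<in>Gr. S a \<omega>) / ennreal c" for \<omega>
  proof (rule SUP_least)
    fix h assume h: "h \<in> H"
    have "\<bar>(\<Sum>j\<in>Gr. phi h (arr N Y \<omega> j)) / c - P h\<bar> \<le> (\<Sum>a\<in>Gr. \<bar>B a h \<omega> - P h\<bar>) / c"
      unfolding avg using c0 by (simp add: divide_right_mono sum_abs)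
    then have "ennreal \<bar>(\<Sum>j\<in>Gr. phi h (arr N Y \<omega> j)) / c - P h\<bar> \<le> ennreal ((\<Sum>a\<in>Gr. \<bar>B a h \<omega> - P h\<bar>) / c)"
      by (rule ennreal_leI)
    also have "\<dots> = (\<Sum>a\<in>Gr. ennreal \<bar>B a h \<omega> - P h\<bar>) / ennreal c"
      using c0 by (simp add: divide_ennreal[symmetric] sum_nonneg)
    also have "\<dots> \<le> (\<Sum>a\<in>Gr. S a \<omega>) / ennreal c"
      unfolding S_def by (intro divide_right_mono_ennreal sum_mono SUP_upper h)
    finally show "ennreal \<bar>(\<Sum>j\<in>Gr. phi h (arr N Y \<omega> j)) / c - P h\<bar> \<le> (\<Sum>a\<in>Gr. S a \<omega>) / ennreal c" .
  qed
  define \<Psi> :: "(('k \<Rightarrow> nat) \<Rightarrow> nat \<times> (nat \<Rightarrow> real^'l)) \<Rightarrow> ennreal" where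
    "\<Psi> = (\<lambda>x. SUP h\<in>H. ennreal \<bar>(\<Sum>t<m. phi h (x (Dg t))) / m - P h\<bar>)"
  have \<Psi>m[measurable]: "\<Psi> \<in> borel_measurable (arrayM UNIV)"
    unfolding \<Psi>_def
  proof (rule borel_measurable_SUP[OF H_count])
    fix h assume h: "h \<in> H"
    note [measurable] = phi_meas[OF H_meas[OF h]]
    show "(\<lambda>x. ennreal \<bar>(\<Sum>t<m. phi h (x (Dg t))) / m - P h\<bar>) \<in> borel_measurable (arrayM UNIV)"
      by measurable
  qed
  have S_eq: "S a \<omega> = \<Psi> (\<lambda>j. arr N Y \<omega> (\<lambda>i. pa a i (j i)))" for a \<omega>
  proof -
    have "(\<Sum>t<m. phi h (arr N Y \<omega> (\<lambda>i. pa a i (Dg t i)))) = (\<Sum>t<m. phi h (arr N Y \<omega> (\<lambda>i. (a i + t) mod C i)))" for h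
      by (rule sum.cong[OF refl]) (simp add: pa_D)
    then show ?thesis by (simp add: S_def \<Psi>_def B_def)
  qed
  have SU: "(\<integral>\<^sup>+\<omega>. S a \<omega> \<partial>M) = U m" for a
  proof -
    have "(\<integral>\<^sup>+\<omega>. S a \<omega> \<partial>M) = (\<integral>\<^sup>+\<omega>. \<Psi> (arr N Y \<omega>) \<partial>M)"
      unfolding S_eq by (rule transfer_nn[OF bij_pa \<Psi>m])
    also have "\<dots> = U m" by (simp add: U_def \<Psi>_def Z_def)
    finally show ?thesis .
  qed
  have Sm: "S a \<in> borel_measurable M" for a
    unfolding S_eq by measurable
  have "(\<integral>\<^sup>+\<omega>. (SUP h\<in>H. ennreal \<bar>(\<Sum>j\<in>Gr. phi h (arr N Y \<omega> j)) / c - P h\<bar>) \<partial>M)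
      \<le> (\<integral>\<^sup>+\<omega>. (\<Sum>a\<in>Gr. S a \<omega>) / ennreal c \<partial>M)"
    by (rule nn_integral_mono) (rule pt)
  also have "\<dots> = (\<integral>\<^sup>+\<omega>. (\<Sum>a\<in>Gr. S a \<omega>) \<partial>M) / ennreal c"
    by (rule nn_integral_divide) (use Sm in measurable)
  also have "(\<integral>\<^sup>+\<omega>. (\<Sum>a\<in>Gr. S a \<omega>) \<partial>M) = (\<Sum>a\<in>Gr. \<integral>\<^sup>+\<omega>. S a \<omega> \<partial>M)"
    by (rule nn_integral_sum) (use Sm in auto)
  also have "\<dots> = ennreal c * U m" using cG by (simp add: SU c_def ennreal_of_nat_eq_real_of_nat)
  also have "(ennreal c * U m) / ennreal c = U m"
    using c0 by (metis ennreal_mult_divide_eq ennreal_eq_0_iff ennreal_neq_top mult.commute not_le)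
  finally show ?thesis by (simp add: Gr_def c_def)
qed

end

context core begin

lemma final_step:
  fixes Fc :: "(real^'l \<Rightarrow> real) set" and C :: "nat \<Rightarrow> 'k \<Rightarrow> nat"
  assumes U0: "U \<longlonglongrightarrow> 0"
    and C_lim: "filterlim (\<lambda>n. Min (range (C n))) at_top sequentially"
    and appr: "\<And>f. f \<in> Fc \<Longrightarrow> \<exists>g. (\<forall>k. g k \<in> H) \<and> (\<forall>y\<in>Ycal. (\<lambda>k. g k y) \<longlonglongrightarrow> f y)"
    and ext: "\<And>f. f \<in> Fc \<Longrightarrow> \<exists>f'. f' \<in> borel_measurable borel \<and> (\<forall>y\<in>Ycal. f' y = f y)"
  shows "(\<lambda>n. \<integral>\<^sup>+\<omega>. (SUP f\<in>Fc. ennreal \<bar>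
            (\<Sum>j\<in>{j. \<forall>i. j i < C n i}. \<Sum>l<N j \<omega>. f (Y j l \<omega>)) / real (\<Prod>i\<in>UNIV. C n i)
            - expectation (\<lambda>\<omega>'. \<Sum>l<N (\<lambda>_. 0) \<omega>'. f (Y (\<lambda>_. 0) l \<omega>'))\<bar>) \<partial>M)
         \<longlonglongrightarrow> 0"
proof -
  define mn where "mn n = Min (range (C n))" for n
  have ptb: "(SUP f\<in>Fc. ennreal \<bar>
            (\<Sum>j\<in>{j. \<forall>i. j i < Cn i}. \<Sum>l<N j \<omega>. f (Y j l \<omega>)) / real (\<Prod>i\<in>UNIV. Cn i)
            - expectation (\<lambda>\<omega>'. \<Sum>l<N (\<lambda>_. 0) \<omega>'. f (Y (\<lambda>_. 0) l \<omega>'))\<bar>)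
       \<le> (SUP h\<in>H. ennreal \<bar>(\<Sum>j\<in>{j. \<forall>i. j i < Cn i}. phi h (arr N Y \<omega> j)) / real (\<Prod>i\<in>UNIV. Cn i) - P h\<bar>)"
    if \<omega>: "\<omega> \<in> space M" for \<omega> and Cn :: "'k \<Rightarrow> nat"
  proof (rule SUP_least)
    fix f assume f: "f \<in> Fc"
    obtain g where g: "\<And>k. g k \<in> H" "\<And>y. y \<in> Ycal \<Longrightarrow> (\<lambda>k. g k y) \<longlonglongrightarrow> f y" using appr[OF f] by blast
    obtain f' where f': "f' \<in> borel_measurable borel" "\<And>y. y \<in> Ycal \<Longrightarrow> f' y = f y" using ext[OF f] by blast
    define Gr where "Gr = {j::'k \<Rightarrow> nat. \<forall>i. j i < Cn i}"
    define c where "c = real (\<Prod>i\<in>UNIV. Cn i)"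
    have lim1: "(\<lambda>k. (\<Sum>j\<in>Gr. phi (g k) (arr N Y \<omega> j)) / c) \<longlonglongrightarrow> (\<Sum>j\<in>Gr. \<Sum>l<N j \<omega>. f (Y j l \<omega>)) / c"
    proof -
      have L: "(\<lambda>k. \<Sum>j\<in>Gr. phi (g k) (arr N Y \<omega> j)) \<longlonglongrightarrow> (\<Sum>j\<in>Gr. \<Sum>l<N j \<omega>. f (Y j l \<omega>))"
        unfolding phi_def arr_def by (simp, intro tendsto_sum g(2) Y_in[OF \<omega>])
      show ?thesis using tendsto_mult_right[OF L, of "inverse c"] by (simp add: divide_inverse)
    qed
    have lim2: "(\<lambda>k. P (g k)) \<longlonglongrightarrow> expectation (\<lambda>\<omega>'. \<Sum>l<N (\<lambda>_. 0) \<omega>'. f (Y (\<lambda>_. 0) l \<omega>'))"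
    proof -
      have "(\<lambda>k. expectation (Z (g k) 0)) \<longlonglongrightarrow> expectation (Z f' 0)"
      proof (rule integral_dominated_convergence[where w="Z Fb 0"])
        show "Z f' 0 \<in> borel_measurable M" using f'(1) by measurable
        show "\<And>k. Z (g k) 0 \<in> borel_measurable M" using H_meas[OF g(1)] by measurable
        show "integrable M (Z Fb 0)" by (rule Zb_int)
        show "AE x in M. (\<lambda>k. Z (g k) 0 x) \<longlonglongrightarrow> Z f' 0 x"
        proof (rule AE_I2)
          fix x assume x: "x \<in> space M"
          show "(\<lambda>k. Z (g k) 0 x) \<longlonglongrightarrow> Z f' 0 x"
            unfolding Z_alt f'(2)[OF Y_in[OF x]] by (intro tendsto_intros g(2) Y_in[OF x])
        qed
        show "\<And>k. AE x in M. norm (Z (g k) 0 x) \<le> Z Fb 0 x"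
          by (rule AE_I2) (simp add: Z_env[OF g(1)])
      qed
      moreover have "expectation (Z f' 0) = expectation (\<lambda>\<omega>'. \<Sum>l<N (\<lambda>_. 0) \<omega>'. f (Y (\<lambda>_. 0) l \<omega>'))"
        by (rule Bochner_Integration.integral_cong[OF refl]) (simp add: Z_alt Dg_def f'(2) Y_in)
      ultimately show ?thesis by (simp add: P_def)
    qed
    have lim: "(\<lambda>k. ennreal \<bar>(\<Sum>j\<in>Gr. phi (g k) (arr N Y \<omega> j)) / c - P (g k)\<bar>)
        \<longlonglongrightarrow> ennreal \<bar>(\<Sum>j\<in>Gr. \<Sum>l<N j \<omega>. f (Y j l \<omega>)) / c - expectation (\<lambda>\<omega>'. \<Sum>l<N (\<lambda>_. 0) \<omega>'. f (Y (\<lambda>_. 0) l \<omega>'))\<bar>"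
      by (intro tendsto_ennrealI tendsto_intros lim1 lim2)
    show "ennreal \<bar>(\<Sum>j\<in>{j. \<forall>i. j i < Cn i}. \<Sum>l<N j \<omega>. f (Y j l \<omega>)) / real (\<Prod>i\<in>UNIV. Cn i)
            - expectation (\<lambda>\<omega>'. \<Sum>l<N (\<lambda>_. 0) \<omega>'. f (Y (\<lambda>_. 0) l \<omega>'))\<bar>
       \<le> (SUP h\<in>H. ennreal \<bar>(\<Sum>j\<in>{j. \<forall>i. j i < Cn i}. phi h (arr N Y \<omega> j)) / real (\<Prod>i\<in>UNIV. Cn i) - P h\<bar>)"
      unfolding Gr_def[symmetric] c_def[symmetric]
    proof (rule LIMSEQ_le_const2[OF lim])
      have "ennreal \<bar>(\<Sum>j\<in>Gr. phi (g n) (arr N Y \<omega> j)) / c - P (g n)\<bar>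
             \<le> (SUP h\<in>H. ennreal \<bar>(\<Sum>j\<in>Gr. phi h (arr N Y \<omega> j)) / c - P h\<bar>)" for n
        by (rule SUP_upper[OF g(1)])
      then show "\<exists>Na. \<forall>n\<ge>Na. ennreal \<bar>(\<Sum>j\<in>Gr. phi (g n) (arr N Y \<omega> j)) / c - P (g n)\<bar>
             \<le> (SUP h\<in>H. ennreal \<bar>(\<Sum>j\<in>Gr. phi h (arr N Y \<omega> j)) / c - P h\<bar>)" by blast
    qed
  qed
  have ev: "eventually (\<lambda>n. mn n \<ge> 1) sequentially"
    using C_lim unfolding mn_def filterlim_at_top by blast
  have UC: "(\<lambda>n. U (mn n)) \<longlonglongrightarrow> 0"
    unfolding mn_def by (rule filterlim_compose[OF U0 C_lim])
  show ?thesis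
  proof (rule tendsto_sandwich[OF _ _ tendsto_const UC])
    show "eventually (\<lambda>n. (0::ennreal) \<le> (\<integral>\<^sup>+\<omega>. (SUP f\<in>Fc. ennreal \<bar>
            (\<Sum>j\<in>{j. \<forall>i. j i < C n i}. \<Sum>l<N j \<omega>. f (Y j l \<omega>)) / real (\<Prod>i\<in>UNIV. C n i)
            - expectation (\<lambda>\<omega>'. \<Sum>l<N (\<lambda>_. 0) \<omega>'. f (Y (\<lambda>_. 0) l \<omega>'))\<bar>) \<partial>M)) sequentially"
      by simp
    show "eventually (\<lambda>n. (\<integral>\<^sup>+\<omega>. (SUP f\<in>Fc. ennreal \<bar>
            (\<Sum>j\<in>{j. \<forall>i. j i < C n i}. \<Sum>l<N j \<omega>. f (Y j l \<omega>)) / real (\<Prod>i\<in>UNIV. C n i)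
            - expectation (\<lambda>\<omega>'. \<Sum>l<N (\<lambda>_. 0) \<omega>'. f (Y (\<lambda>_. 0) l \<omega>'))\<bar>) \<partial>M) \<le> U (mn n)) sequentially"
      using ev
    proof eventually_elim
      case (elim n)
      have Cm: "\<forall>i. C n i \<ge> mn n" unfolding mn_def by (auto intro: Min_le)
      have "(\<integral>\<^sup>+\<omega>. (SUP f\<in>Fc. ennreal \<bar>
            (\<Sum>j\<in>{j. \<forall>i. j i < C n i}. \<Sum>l<N j \<omega>. f (Y j l \<omega>)) / real (\<Prod>i\<in>UNIV. C n i)
            - expectation (\<lambda>\<omega>'. \<Sum>l<N (\<lambda>_. 0) \<omega>'. f (Y (\<lambda>_. 0) l \<omega>'))\<bar>) \<partial>M)
        \<le> (\<integral>\<^sup>+\<omega>. (SUP h\<in>H. ennreal \<bar>(\<Sum>j\<in>{j. \<forall>i. j i < C n i}. phi h (arr N Y \<omega> j)) / real (\<Prod>i\<in>UNIV. C n i) - P h\<bar>) \<partial>M)"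
        by (rule nn_integral_mono) (rule ptb)
      also have "\<dots> \<le> U (mn n)"
        by (rule grid_bound) (use elim Cm in auto)
      finally show ?case .
    qed
  qed
qed

end

lemma cov_obtain:
  assumes "covering_number eps F d \<le> enat B"
  shows "\<exists>G. finite G \<and> G \<subseteq> F \<and> (\<forall>f\<in>F. \<exists>g\<in>G. d f g \<le> eps) \<and> card G \<le> B"
proof -
  define S where "S = {enat (card G) | G. finite G \<and> G \<subseteq> F \<and> (\<forall>f\<in>F. \<exists>g\<in>G. d f g \<le> eps)}"
  have le: "Inf S \<le> enat B" using assms unfolding covering_number_def S_def .
  have "S \<noteq> {}"
  proof
    assume "S = {}" then have "Inf S = \<infinity>" by (simp add: Inf_enat_def)
    then show False using le by simp
  qed
  then have "Inf S \<in> S" unfolding Inf_enat_def by (auto intro: LeastI_ex)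
  then obtain G where "finite G" "G \<subseteq> F" "\<forall>f\<in>F. \<exists>g\<in>G. d f g \<le> eps" "Inf S = enat (card G)"
    unfolding S_def by blast
  then show ?thesis using le by auto
qed

lemma cov_obtain2:
  assumes "covering_number eps F d < \<infinity>"
  shows "\<exists>G. finite G \<and> G \<subseteq> F \<and> (\<forall>f\<in>F. \<exists>g\<in>G. d f g \<le> eps)"
proof -
  obtain B where "covering_number eps F d = enat B" using assms by (cases "covering_number eps F d") auto
  then show ?thesis using cov_obtain[of eps F d B] by auto
qed

lemma L1Q_cong:
  assumes "finite (set_pmf Q)" "\<And>y. y \<in> set_pmf Q \<Longrightarrow> f y = g y"
  shows "L1Q Q f = L1Q Q g"
proof -
  have "L1Q Q f = (\<Sum>a\<in>set_pmf Q. \<bar>f a\<bar> * pmf Q a)"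
    unfolding L1Q_def by (rule integral_measure_pmf_real) (use assms in auto)
  also have "\<dots> = (\<Sum>a\<in>set_pmf Q. \<bar>g a\<bar> * pmf Q a)" using assms(2) by simp
  also have "\<dots> = L1Q Q g"
    unfolding L1Q_def by (rule integral_measure_pmf_real[symmetric]) (use assms in auto)
  finally show ?thesis .
qed

lemma wsup_pt:
  assumes y: "y \<in> Ycal" and W: "wsup_norm Ycal \<beta> f \<le> ereal c"
  shows "\<bar>f y\<bar> \<le> c * (1 + (norm y)\<^sup>2) powr (- \<beta> / 2)"
proof -
  define p where "p = (1 + (norm y)\<^sup>2) powr (\<beta> / 2)"
  have p0: "1 + (norm y)\<^sup>2 > 0" by (simp add: add_pos_nonneg)
  have p: "p > 0" unfolding p_def using p0 by simp
  have "ereal \<bar>f y * p\<bar> \<le> wsup_norm Ycal \<beta> f"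
    unfolding wsup_norm_def p_def using y by (rule SUP_upper)
  then have "ereal (\<bar>f y\<bar> * p) \<le> wsup_norm Ycal \<beta> f" using p by (simp add: abs_mult)
  then have "ereal (\<bar>f y\<bar> * p) \<le> ereal c" using W by (rule order_trans)
  then have "\<bar>f y\<bar> * p \<le> c" by simp
  then have "\<bar>f y\<bar> \<le> c / p" using p by (simp add: field_simps)
  also have "c / p = c * (1 + (norm y)\<^sup>2) powr (- \<beta> / 2)"
  proof -
    have "(1 + (norm y)\<^sup>2) powr (- \<beta> / 2) = inverse p"
      unfolding p_def by (metis minus_divide_left powr_minus)
    then show ?thesis by (metis divide_inverse)
  qed
  finally show ?thesis .
qed

lemma restrict_ext_some:
  fixes f :: "'a::topological_space \<Rightarrow> real"
  assumes "f \<in> borel_measurable (restrict_space borel S)"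
  shows "(SOME h. h \<in> borel_measurable borel \<and> (\<forall>y\<in>S. h y = f y)) \<in> borel_measurable borel \<and>
         (\<forall>y\<in>S. (SOME h. h \<in> borel_measurable borel \<and> (\<forall>y\<in>S. h y = f y)) y = f y)"
proof -
  obtain h where "h \<in> borel_measurable borel" "\<forall>y\<in>S. h y = f y" using restrict_space_ext[OF assms] by blast
  then show ?thesis by (intro someI[where P="\<lambda>h. h \<in> borel_measurable borel \<and> (\<forall>y\<in>S. h y = f y)"]) auto
qed

context arrset begin

lemma Ycal_ne: "Ycal \<noteq> {}"
proof -
  obtain \<omega> where "\<omega> \<in> space M" using not_empty by blast
  then show ?thesis using Y_in by blast
qed

lemma case_ii_facts:
  fixes Fc :: "(real^'l \<Rightarrow> real) set"
  assumes env: "envelope Ycal Fc Fe" and W: "wsup_norm Ycal \<beta> Fe < \<infinity>"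
    and wint: "(\<integral>\<^sup>+\<omega>. ennreal \<bar>\<Sum>l<N (\<lambda>_. 0) \<omega>. (1 + (norm (Y (\<lambda>_. 0) l \<omega>))\<^sup>2) powr (- \<beta> / 2)\<bar> \<partial>M) < \<infinity>"
  shows "\<exists>Wr\<ge>0. wsup_norm Ycal \<beta> Fe = ereal Wr \<and>
           integrable M (Z (\<lambda>y. Wr * (1 + (norm y)\<^sup>2) powr (- \<beta> / 2)) 0) \<and>
           (\<integral>\<^sup>+\<omega>. ennreal (\<Sum>l<N (\<lambda>_. 0) \<omega>. Fe (Y (\<lambda>_. 0) l \<omega>)) \<partial>M) < \<infinity>"
proof -
  obtain y0 where y0: "y0 \<in> Ycal" using Ycal_ne by blast
  have "ereal \<bar>Fe y0 * (1 + (norm y0)\<^sup>2) powr (\<beta> / 2)\<bar> \<le> wsup_norm Ycal \<beta> Fe"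
    unfolding wsup_norm_def using y0 by (rule SUP_upper)
  then have W0: "wsup_norm Ycal \<beta> Fe \<ge> 0" by (rule order_trans[rotated]) simp
  then obtain Wr where Wr: "wsup_norm Ycal \<beta> Fe = ereal Wr" "Wr \<ge> 0"
    using W by (cases "wsup_norm Ycal \<beta> Fe") auto
  define w where "w y = (1 + (norm y)\<^sup>2) powr (- \<beta> / 2)" for y :: "real^'l"
  have wm[measurable]: "w \<in> borel_measurable borel" unfolding w_def by measurable
  have w0: "w y \<ge> 0" for y unfolding w_def by simp
  have Zw: "Z w 0 \<omega> = (\<Sum>l<N (\<lambda>_. 0) \<omega>. (1 + (norm (Y (\<lambda>_. 0) l \<omega>))\<^sup>2) powr (- \<beta> / 2))" for \<omega>
    by (simp add: Z_alt Dg_def w_def)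
  have wi: "integrable M (Z w 0)"
  proof (rule integrableI_bounded)
    show "Z w 0 \<in> borel_measurable M" by measurable
    show "(\<integral>\<^sup>+\<omega>. ennreal (norm (Z w 0 \<omega>)) \<partial>M) < \<infinity>" using wint by (simp add: Zw)
  qed
  have eqw: "Z (\<lambda>y. Wr * (1 + (norm y)\<^sup>2) powr (- \<beta> / 2)) 0 \<omega> = Wr * Z w 0 \<omega>" for \<omega>
    by (simp add: Z_alt w_def sum_distrib_left)
  have i2: "integrable M (Z (\<lambda>y. Wr * (1 + (norm y)\<^sup>2) powr (- \<beta> / 2)) 0)"
    unfolding eqw using wi by simp
  have Fe_le: "Fe y \<le> Wr * w y" if "y \<in> Ycal" for y
    using wsup_pt[OF that, of \<beta> Fe Wr] Wr(1) unfolding w_def by simp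
  have "(\<integral>\<^sup>+\<omega>. ennreal (\<Sum>l<N (\<lambda>_. 0) \<omega>. Fe (Y (\<lambda>_. 0) l \<omega>)) \<partial>M) \<le> (\<integral>\<^sup>+\<omega>. ennreal (Wr * Z w 0 \<omega>) \<partial>M)"
  proof (rule nn_integral_mono, rule ennreal_leI)
    fix \<omega> assume \<omega>: "\<omega> \<in> space M"
    have "(\<Sum>l<N (\<lambda>_. 0) \<omega>. Fe (Y (\<lambda>_. 0) l \<omega>)) \<le> (\<Sum>l<N (\<lambda>_. 0) \<omega>. Wr * w (Y (\<lambda>_. 0) l \<omega>))"
      by (rule sum_mono) (rule Fe_le[OF Y_in[OF \<omega>]])
    then show "(\<Sum>l<N (\<lambda>_. 0) \<omega>. Fe (Y (\<lambda>_. 0) l \<omega>)) \<le> Wr * Z w 0 \<omega>"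
      by (simp add: Z_alt Dg_def sum_distrib_left)
  qed
  also have "\<dots> = ennreal (expectation (\<lambda>\<omega>. Wr * Z w 0 \<omega>))"
    by (rule nn_integral_eq_integral) (use wi Wr(2) Z_nonneg[of w] w0 in \<open>auto intro!: AE_I2\<close>)
  also have "\<dots> < \<infinity>" by simp
  finally show ?thesis using Wr i2 by blast
qed

end

context arrset begin

lemma main:
  fixes Fc :: "(real^'l \<Rightarrow> real) set" and C :: "nat \<Rightarrow> 'k \<Rightarrow> nat"
  assumes C_lim: "filterlim (\<lambda>n. Min (range (C n))) at_top sequentially"
    and pm: "pointwise_measurable Ycal Fc"
    and cond: "(\<exists>Fe. envelope Ycal Fc Fe
                 \<and> (\<integral>\<^sup>+\<omega>. ennreal (\<Sum>l<N (\<lambda>_. 0) \<omega>. Fe (Y (\<lambda>_. 0) l \<omega>)) \<partial>M) < \<infinity>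
                 \<and> (\<forall>\<eta>>0. \<exists>B::nat. \<forall>Q::(real^'l) pmf.
                        finite (set_pmf Q) \<and> set_pmf Q \<subseteq> Ycal \<longrightarrow>
                        covering_number (ereal (\<eta> * L1Q Q Fe)) Fc
                          (\<lambda>f g. ereal (L1Q Q (\<lambda>y. f y - g y))) \<le> enat B))
             \<or> (\<exists>Fe \<beta>. envelope Ycal Fc Fe
                 \<and> wsup_norm Ycal \<beta> Fe < \<infinity>
                 \<and> (\<integral>\<^sup>+\<omega>. ennreal \<bar>\<Sum>l<N (\<lambda>_. 0) \<omega>.
                        (1 + (norm (Y (\<lambda>_. 0) l \<omega>))\<^sup>2) powr (- \<beta> / 2)\<bar> \<partial>M) < \<infinity>
                 \<and> (\<forall>\<eta>>0. covering_number (ereal \<eta> * wsup_norm Ycal \<beta> Fe) Fc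
                          (\<lambda>f g. wsup_norm Ycal \<beta> (\<lambda>y. f y - g y)) < \<infinity>))"
  shows "(\<lambda>n. \<integral>\<^sup>+\<omega>. (SUP f\<in>Fc. ennreal \<bar>
            (\<Sum>j\<in>{j. \<forall>i. j i < C n i}. \<Sum>l<N j \<omega>. f (Y j l \<omega>)) / real (\<Prod>i\<in>UNIV. C n i)
            - expectation (\<lambda>\<omega>'. \<Sum>l<N (\<lambda>_. 0) \<omega>'. f (Y (\<lambda>_. 0) l \<omega>'))\<bar>) \<partial>M)
         \<longlonglongrightarrow> 0"
proof (cases "Fc = {}")
  case True
  then show ?thesis by (simp add: bot_ennreal)
next
  case False
  then obtain f0 where f0: "f0 \<in> Fc" by blast
  have pm': "(\<forall>f\<in>Fc. f \<in> borel_measurable (restrict_space borel Ycal)) \<and>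
     (\<exists>G. G \<subseteq> Fc \<and> countable G \<and>
        (\<forall>f\<in>Fc. \<exists>g. (\<forall>m. g m \<in> G) \<and> (\<forall>y\<in>Ycal. (\<lambda>m. g m y) \<longlonglongrightarrow> f y)))"
    using pm unfolding pointwise_measurable_def by simp
  then have Fm: "\<And>f. f \<in> Fc \<Longrightarrow> f \<in> borel_measurable (restrict_space borel Ycal)" by simp
  from pm'[THEN conjunct2] obtain G where G0: "G \<subseteq> Fc \<and> countable G \<and>
        (\<forall>f\<in>Fc. \<exists>g. (\<forall>m. g m \<in> G) \<and> (\<forall>y\<in>Ycal. (\<lambda>m. g m y) \<longlonglongrightarrow> f y))" ..
  have G: "G \<subseteq> Fc" "countable G"
      "\<And>f. f \<in> Fc \<Longrightarrow> \<exists>g. (\<forall>m. g m \<in> G) \<and> (\<forall>y\<in>Ycal. (\<lambda>m. g m y) \<longlonglongrightarrow> f y)"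
    using G0 by auto
  define ext where "ext f = (SOME h. h \<in> borel_measurable borel \<and> (\<forall>y\<in>Ycal. h y = f y))" for f :: "real^'l \<Rightarrow> real"
  have extp: "ext f \<in> borel_measurable borel" "\<And>y. y \<in> Ycal \<Longrightarrow> ext f y = f y"
    if "f \<in> borel_measurable (restrict_space borel Ycal)" for f
    using restrict_ext_some[OF that] unfolding ext_def by blast+
  obtain Fe where env: "envelope Ycal Fc Fe"
    and alt: "(\<integral>\<^sup>+\<omega>. ennreal (\<Sum>l<N (\<lambda>_. 0) \<omega>. Fe (Y (\<lambda>_. 0) l \<omega>)) \<partial>M) < \<infinity>
                 \<and> (\<forall>\<eta>>0. \<exists>B::nat. \<forall>Q::(real^'l) pmf.
                        finite (set_pmf Q) \<and> set_pmf Q \<subseteq> Ycal \<longrightarrow>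
                        covering_number (ereal (\<eta> * L1Q Q Fe)) Fc
                          (\<lambda>f g. ereal (L1Q Q (\<lambda>y. f y - g y))) \<le> enat B)
             \<or> (\<exists>\<beta>. wsup_norm Ycal \<beta> Fe < \<infinity>
                 \<and> (\<integral>\<^sup>+\<omega>. ennreal \<bar>\<Sum>l<N (\<lambda>_. 0) \<omega>.
                        (1 + (norm (Y (\<lambda>_. 0) l \<omega>))\<^sup>2) powr (- \<beta> / 2)\<bar> \<partial>M) < \<infinity>
                 \<and> (\<forall>\<eta>>0. covering_number (ereal \<eta> * wsup_norm Ycal \<beta> Fe) Fc
                          (\<lambda>f g. wsup_norm Ycal \<beta> (\<lambda>y. f y - g y)) < \<infinity>))"
    using cond
  proof (elim disjE exE conjE)
    fix Fe assume "envelope Ycal Fc Fe" "(\<integral>\<^sup>+\<omega>. ennreal (\<Sum>l<N (\<lambda>_. 0) \<omega>. Fe (Y (\<lambda>_. 0) l \<omega>)) \<partial>M) < \<infinity>"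
      "\<forall>\<eta>>0. \<exists>B::nat. \<forall>Q::(real^'l) pmf.
                        finite (set_pmf Q) \<and> set_pmf Q \<subseteq> Ycal \<longrightarrow>
                        covering_number (ereal (\<eta> * L1Q Q Fe)) Fc
                          (\<lambda>f g. ereal (L1Q Q (\<lambda>y. f y - g y))) \<le> enat B"
    note h = this
    show thesis by (rule that[OF h(1) disjI1[OF conjI[OF h(2) h(3)]]])
  next
    fix Fe \<beta> assume "envelope Ycal Fc Fe" "wsup_norm Ycal \<beta> Fe < \<infinity>"
      "(\<integral>\<^sup>+\<omega>. ennreal \<bar>\<Sum>l<N (\<lambda>_. 0) \<omega>.
                        (1 + (norm (Y (\<lambda>_. 0) l \<omega>))\<^sup>2) powr (- \<beta> / 2)\<bar> \<partial>M) < \<infinity>"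
      "\<forall>\<eta>>0. covering_number (ereal \<eta> * wsup_norm Ycal \<beta> Fe) Fc
                          (\<lambda>f g. wsup_norm Ycal \<beta> (\<lambda>y. f y - g y)) < \<infinity>"
    note h = this
    have "\<exists>\<beta>. wsup_norm Ycal \<beta> Fe < \<infinity>
                 \<and> (\<integral>\<^sup>+\<omega>. ennreal \<bar>\<Sum>l<N (\<lambda>_. 0) \<omega>.
                        (1 + (norm (Y (\<lambda>_. 0) l \<omega>))\<^sup>2) powr (- \<beta> / 2)\<bar> \<partial>M) < \<infinity>
                 \<and> (\<forall>\<eta>>0. covering_number (ereal \<eta> * wsup_norm Ycal \<beta> Fe) Fc
                          (\<lambda>f g. wsup_norm Ycal \<beta> (\<lambda>y. f y - g y)) < \<infinity>)"
      using h(2-4) by (intro exI[of _ \<beta>] conjI)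
    then show thesis by (rule that[OF h(1) disjI2])
  qed
  have Fe_m: "Fe \<in> borel_measurable (restrict_space borel Ycal)" and Fe_env: "\<And>f y. f \<in> Fc \<Longrightarrow> y \<in> Ycal \<Longrightarrow> \<bar>f y\<bar> \<le> Fe y"
    using env unfolding envelope_def by auto
  have Fint: "(\<integral>\<^sup>+\<omega>. ennreal (\<Sum>l<N (\<lambda>_. 0) \<omega>. Fe (Y (\<lambda>_. 0) l \<omega>)) \<partial>M) < \<infinity>"
  proof (cases "(\<integral>\<^sup>+\<omega>. ennreal (\<Sum>l<N (\<lambda>_. 0) \<omega>. Fe (Y (\<lambda>_. 0) l \<omega>)) \<partial>M) < \<infinity>")
    case False
    then obtain \<beta> where "wsup_norm Ycal \<beta> Fe < \<infinity>"
        "(\<integral>\<^sup>+\<omega>. ennreal \<bar>\<Sum>l<N (\<lambda>_. 0) \<omega>. (1 + (norm (Y (\<lambda>_. 0) l \<omega>))\<^sup>2) powr (- \<beta> / 2)\<bar> \<partial>M) < \<infinity>"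
      using alt by blast
    from case_ii_facts[OF env this] show ?thesis by blast
  qed
  define H where "H = ext ` G"
  define Fb where "Fb = ext Fe"
  have Fb_eq: "\<And>y. y \<in> Ycal \<Longrightarrow> Fb y = Fe y" unfolding Fb_def by (rule extp(2)[OF Fe_m])
  have H_eq: "\<exists>g\<in>Fc. \<forall>y\<in>Ycal. h y = g y" if "h \<in> H" for h
    using that G(1) extp(2)[OF Fm] unfolding H_def by blast
  interpret C: core M Ycal N Y H Fb
  proof (rule core.intro[OF arrset_axioms], unfold_locales)
    show "countable H" unfolding H_def using G(2) by simp
    show "\<And>h. h \<in> H \<Longrightarrow> h \<in> borel_measurable borel" unfolding H_def using G(1) extp(1)[OF Fm] by blast
    show "Fb \<in> borel_measurable borel" unfolding Fb_def by (rule extp(1)[OF Fe_m])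
    show "\<And>h y. h \<in> H \<Longrightarrow> y \<in> Ycal \<Longrightarrow> \<bar>h y\<bar> \<le> Fb y"
      using H_eq Fe_env Fb_eq by fastforce
    show "\<And>y. y \<in> Ycal \<Longrightarrow> Fb y \<ge> 0"
      using Fe_env[OF f0] Fb_eq by (metis abs_ge_zero order_trans)
    have "(\<integral>\<^sup>+\<omega>. ennreal (Z Fb 0 \<omega>) \<partial>M) = (\<integral>\<^sup>+\<omega>. ennreal (\<Sum>l<N (\<lambda>_. 0) \<omega>. Fe (Y (\<lambda>_. 0) l \<omega>)) \<partial>M)"
      by (rule nn_integral_cong) (simp add: Z_alt Dg_def Fb_eq Y_in)
    then show "(\<integral>\<^sup>+\<omega>. ennreal (Z Fb 0 \<omega>) \<partial>M) < \<infinity>" using Fint by simp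
  qed
  have U0: "C.U \<longlonglongrightarrow> 0"
  proof (rule C.U_tendsto)
    fix K e :: real assume K: "K > 0" and e: "e > 0"
    show "\<exists>(Bn::nat) (\<rho>::nat \<Rightarrow> 'w \<Rightarrow> real). \<forall>m>0.
      integrable M (\<rho> m) \<and> (\<forall>\<omega>\<in>space M. \<rho> m \<omega> \<ge> 0) \<and> expectation (\<rho> m) \<le> e \<and>
      (\<forall>\<omega>\<in>space M. \<exists>V. finite V \<and> card V \<le> Bn \<and> (\<forall>c\<in>V. \<forall>t<2*m. \<bar>c t\<bar> \<le> K) \<and>
        (\<forall>h\<in>H. \<exists>c\<in>V. (\<Sum>t<2*m. \<bar>(if Z Fb t \<omega> \<le> K then Z h t \<omega> else 0) - c t\<bar>) \<le> m * \<rho> m \<omega>))"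
    proof (cases "\<forall>\<eta>>0. \<exists>B::nat. \<forall>Q::(real^'l) pmf.
                        finite (set_pmf Q) \<and> set_pmf Q \<subseteq> Ycal \<longrightarrow>
                        covering_number (ereal (\<eta> * L1Q Q Fe)) Fc
                          (\<lambda>f g. ereal (L1Q Q (\<lambda>y. f y - g y))) \<le> enat B")
      case True
      show ?thesis
      proof (rule C.cov_i[OF _ K e])
        fix \<eta> :: real assume \<eta>: "\<eta> > 0"
        from True \<eta> obtain B :: nat where B: "\<forall>Q::(real^'l) pmf.
                        finite (set_pmf Q) \<and> set_pmf Q \<subseteq> Ycal \<longrightarrow>
                        covering_number (ereal (\<eta> * L1Q Q Fe)) Fc
                          (\<lambda>f g. ereal (L1Q Q (\<lambda>y. f y - g y))) \<le> enat B" by blast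
        show "\<exists>B::nat. \<forall>Q::(real^'l) pmf. finite (set_pmf Q) \<and> set_pmf Q \<subseteq> Ycal \<longrightarrow>
           (\<exists>G0. finite G0 \<and> card G0 \<le> B \<and> (\<forall>f\<in>G0. \<forall>y\<in>Ycal. \<bar>f y\<bar> \<le> Fb y) \<and>
              (\<forall>h\<in>H. \<exists>f\<in>G0. L1Q Q (\<lambda>y. h y - f y) \<le> \<eta> * L1Q Q Fb))"
        proof (intro exI[of _ B] allI impI)
          fix Q :: "(real^'l) pmf" assume Q: "finite (set_pmf Q) \<and> set_pmf Q \<subseteq> Ycal"
          then have cn: "covering_number (ereal (\<eta> * L1Q Q Fe)) Fc (\<lambda>f g. ereal (L1Q Q (\<lambda>y. f y - g y))) \<le> enat B"
            using B by blast
          from cov_obtain[OF cn] obtain G0 where G0: "finite G0" "G0 \<subseteq> Fc"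
              "\<forall>f\<in>Fc. \<exists>g\<in>G0. ereal (L1Q Q (\<lambda>y. f y - g y)) \<le> ereal (\<eta> * L1Q Q Fe)" "card G0 \<le> B"
            by blast
          have LFb: "L1Q Q Fb = L1Q Q Fe" by (rule L1Q_cong) (use Q Fb_eq in auto)
          show "\<exists>G0. finite G0 \<and> card G0 \<le> B \<and> (\<forall>f\<in>G0. \<forall>y\<in>Ycal. \<bar>f y\<bar> \<le> Fb y) \<and>
              (\<forall>h\<in>H. \<exists>f\<in>G0. L1Q Q (\<lambda>y. h y - f y) \<le> \<eta> * L1Q Q Fb)"
          proof (intro exI[of _ G0] conjI ballI)
            show "finite G0" "card G0 \<le> B" by fact+
            fix f y assume "f \<in> G0" "y \<in> Ycal"
            then show "\<bar>f y\<bar> \<le> Fb y" using G0(2) Fe_env Fb_eq by auto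
          next
            fix h assume h: "h \<in> H"
            then obtain g where g: "g \<in> Fc" "\<forall>y\<in>Ycal. h y = g y" using H_eq by blast
            then obtain f where f: "f \<in> G0" "ereal (L1Q Q (\<lambda>y. g y - f y)) \<le> ereal (\<eta> * L1Q Q Fe)" using G0(3) by blast
            have "L1Q Q (\<lambda>y. h y - f y) = L1Q Q (\<lambda>y. g y - f y)" by (rule L1Q_cong) (use Q g in auto)
            then have "L1Q Q (\<lambda>y. h y - f y) \<le> \<eta> * L1Q Q Fb" using f LFb by simp
            then show "\<exists>f\<in>G0. L1Q Q (\<lambda>y. h y - f y) \<le> \<eta> * L1Q Q Fb" using f(1) by blast
          qed
        qed
      qed
    next
      case False
      then obtain \<beta> where b1: "wsup_norm Ycal \<beta> Fe < \<infinity>"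
        and b2: "(\<integral>\<^sup>+\<omega>. ennreal \<bar>\<Sum>l<N (\<lambda>_. 0) \<omega>. (1 + (norm (Y (\<lambda>_. 0) l \<omega>))\<^sup>2) powr (- \<beta> / 2)\<bar> \<partial>M) < \<infinity>"
        and b3: "\<forall>\<eta>>0. covering_number (ereal \<eta> * wsup_norm Ycal \<beta> Fe) Fc (\<lambda>f g. wsup_norm Ycal \<beta> (\<lambda>y. f y - g y)) < \<infinity>"
        using alt by blast
      obtain Wr where Wr: "Wr \<ge> 0" "wsup_norm Ycal \<beta> Fe = ereal Wr"
        "integrable M (Z (\<lambda>y. Wr * (1 + (norm y)\<^sup>2) powr (- \<beta> / 2)) 0)"
        using case_ii_facts[OF env b1 b2] by blast
      show ?thesis
      proof (rule C.cov_ii[OF _ _ Wr(3) _ K e])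
        show "(\<lambda>y. Wr * (1 + (norm y)\<^sup>2) powr (- \<beta> / 2)) \<in> borel_measurable borel" by measurable
        show "\<And>y. 0 \<le> Wr * (1 + (norm y)\<^sup>2) powr (- \<beta> / 2)" using Wr(1) by simp
        fix \<epsilon> :: real assume \<epsilon>: "\<epsilon> > 0"
        have "covering_number (ereal \<epsilon> * wsup_norm Ycal \<beta> Fe) Fc (\<lambda>f g. wsup_norm Ycal \<beta> (\<lambda>y. f y - g y)) < \<infinity>"
          using b3 \<epsilon> by blast
        from cov_obtain2[OF this] obtain G0 where G0: "finite G0" "G0 \<subseteq> Fc"
            "\<forall>f\<in>Fc. \<exists>g\<in>G0. wsup_norm Ycal \<beta> (\<lambda>y. f y - g y) \<le> ereal \<epsilon> * wsup_norm Ycal \<beta> Fe" by blast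
        show "\<exists>G0. finite G0 \<and> (\<forall>f\<in>G0. \<forall>y\<in>Ycal. \<bar>f y\<bar> \<le> Fb y) \<and>
                  (\<forall>h\<in>H. \<exists>f\<in>G0. \<forall>y\<in>Ycal. \<bar>h y - f y\<bar> \<le> \<epsilon> * (Wr * (1 + (norm y)\<^sup>2) powr (- \<beta> / 2)))"
        proof (intro exI[of _ G0] conjI ballI)
          show "finite G0" by fact
          fix f y assume "f \<in> G0" "y \<in> Ycal"
          then show "\<bar>f y\<bar> \<le> Fb y" using G0(2) Fe_env Fb_eq by auto
        next
          fix h assume h: "h \<in> H"
          then obtain g where g: "g \<in> Fc" "\<forall>y\<in>Ycal. h y = g y" using H_eq by blast
          then obtain f where f: "f \<in> G0" "wsup_norm Ycal \<beta> (\<lambda>y. g y - f y) \<le> ereal (\<epsilon> * Wr)"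
            using G0(3) Wr(2) by fastforce
          have "\<bar>h y - f y\<bar> \<le> \<epsilon> * (Wr * (1 + (norm y)\<^sup>2) powr (- \<beta> / 2))" if y: "y \<in> Ycal" for y
            using wsup_pt[OF y f(2)] g(2) y by (simp add: mult.assoc)
          then show "\<exists>f\<in>G0. \<forall>y\<in>Ycal. \<bar>h y - f y\<bar> \<le> \<epsilon> * (Wr * (1 + (norm y)\<^sup>2) powr (- \<beta> / 2))"
            using f(1) by blast
        qed
      qed
    qed
  qed
  show ?thesis
  proof (rule C.final_step[OF U0 C_lim])
    fix f assume f: "f \<in> Fc"
    obtain g where g: "\<forall>m. g m \<in> G" "\<forall>y\<in>Ycal. (\<lambda>m. g m y) \<longlonglongrightarrow> f y" using G(3)[OF f] by blast
    show "\<exists>g. (\<forall>k. g k \<in> H) \<and> (\<forall>y\<in>Ycal. (\<lambda>k. g k y) \<longlonglongrightarrow> f y)"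
    proof (intro exI[of _ "\<lambda>k. ext (g k)"] conjI allI ballI)
      show "ext (g k) \<in> H" for k unfolding H_def using g(1) by blast
      fix y assume y: "y \<in> Ycal"
      have "ext (g k) y = g k y" for k using extp(2)[OF Fm y] g(1) G(1) by blast
      then show "(\<lambda>k. ext (g k) y) \<longlonglongrightarrow> f y" using g(2) y by simp
    qed
  next
    fix f assume f: "f \<in> Fc"
    show "\<exists>f'. f' \<in> borel_measurable borel \<and> (\<forall>y\<in>Ycal. f' y = f y)"
      using extp[OF Fm[OF f]] by blast
  qed
qed

end

theorem lemma13:
  fixes M :: "'w measure"
    and Ycal :: "(real^'l) set"
    and N :: "('k::finite \<Rightarrow> nat) \<Rightarrow> 'w \<Rightarrow> nat"
    and Y :: "('k \<Rightarrow> nat) \<Rightarrow> nat \<Rightarrow> 'w \<Rightarrow> real^'l"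
    and Fc :: "(real^'l \<Rightarrow> real) set"
    and C :: "nat \<Rightarrow> 'k \<Rightarrow> nat"
  assumes M: "prob_space M"
    and N_meas: "\<And>j. N j \<in> M \<rightarrow>\<^sub>M count_space UNIV"
    and Y_meas: "\<And>j l. Y j l \<in> borel_measurable M"
    and Y_in: "\<And>j l \<omega>. \<omega> \<in> space M \<Longrightarrow> Y j l \<omega> \<in> Ycal"
    and exch: "\<And>\<pi> :: 'k \<Rightarrow> nat \<Rightarrow> nat. (\<forall>i. bij (\<pi> i)) \<Longrightarrow>
        distr M (arrayM UNIV) (\<lambda>\<omega>. (\<lambda>j. arr N Y \<omega> (\<lambda>i. \<pi> i (j i))))
          = distr M (arrayM UNIV) (arr N Y)"
    and indep: "\<And>c :: 'k \<Rightarrow> nat. (\<forall>i. c i \<ge> 1) \<Longrightarrow>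
        prob_space.indep_var M
          (arrayM {j. \<forall>i. j i < c i}) (\<lambda>\<omega>. restrict (arr N Y \<omega>) {j. \<forall>i. j i < c i})
          (arrayM {j. \<forall>i. j i \<ge> c i}) (\<lambda>\<omega>. restrict (arr N Y \<omega>) {j. \<forall>i. j i \<ge> c i})"
    and EN_pos: "(\<integral>\<^sup>+\<omega>. ennreal (real (N (\<lambda>_. 0) \<omega>)) \<partial>M) > 0"
    and C_lim: "filterlim (\<lambda>n. Min (range (C n))) at_top sequentially"
    and C_ratio: "\<exists>lam::'k \<Rightarrow> real. \<forall>i.
        (\<lambda>n. real (Min (range (C n))) / real (C n i)) \<longlonglongrightarrow> lam i"
    and pm: "pointwise_measurable Ycal Fc"
    and cond: "(\<exists>Fe. envelope Ycal Fc Fe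
                 \<and> (\<integral>\<^sup>+\<omega>. ennreal (\<Sum>l<N (\<lambda>_. 0) \<omega>. Fe (Y (\<lambda>_. 0) l \<omega>)) \<partial>M) < \<infinity>
                 \<and> (\<forall>\<eta>>0. \<exists>B::nat. \<forall>Q::(real^'l) pmf.
                        finite (set_pmf Q) \<and> set_pmf Q \<subseteq> Ycal \<longrightarrow>
                        covering_number (ereal (\<eta> * L1Q Q Fe)) Fc
                          (\<lambda>f g. ereal (L1Q Q (\<lambda>y. f y - g y))) \<le> enat B))
             \<or> (\<exists>Fe \<beta>. envelope Ycal Fc Fe
                 \<and> wsup_norm Ycal \<beta> Fe < \<infinity>
                 \<and> (\<integral>\<^sup>+\<omega>. ennreal \<bar>\<Sum>l<N (\<lambda>_. 0) \<omega>.
                        (1 + (norm (Y (\<lambda>_. 0) l \<omega>))\<^sup>2) powr (- \<beta> / 2)\<bar> \<partial>M) < \<infinity>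
                 \<and> (\<forall>\<eta>>0. covering_number (ereal \<eta> * wsup_norm Ycal \<beta> Fe) Fc
                          (\<lambda>f g. wsup_norm Ycal \<beta> (\<lambda>y. f y - g y)) < \<infinity>))"
  shows "(\<lambda>n. \<integral>\<^sup>+\<omega>. (SUP f\<in>Fc. ennreal \<bar>
            (\<Sum>j\<in>{j. \<forall>i. j i < C n i}. \<Sum>l<N j \<omega>. f (Y j l \<omega>)) / real (\<Prod>i\<in>UNIV. C n i)
            - prob_space.expectation M (\<lambda>\<omega>'. \<Sum>l<N (\<lambda>_. 0) \<omega>'. f (Y (\<lambda>_. 0) l \<omega>'))\<bar>) \<partial>M)
         \<longlonglongrightarrow> 0"
  proof -
  interpret arrset M Ycal N Y by (rule arrset.intro[OF M N_meas Y_meas Y_in exch indep])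
  show ?thesis by (rule main[OF C_lim pm cond])
qed

end
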